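(* Let $N=3$, $L\ge1$, and let $R_{12}(\xi_1,\xi_2)=\sum_{i=1}^3 a_i(\xi_1,\xi_2)e^{(ii)}_1\otimes e^{(ii)}_2+\sum_{i\ne j}b_{ij}(\xi_1,\xi_2)e^{(ii)}_1\otimes e^{(jj)}_2+\sum_{i\ne j}c_{ij}(\xi_1,\xi_2)e^{(ij)}_1\otimes e^{(ji)}_2$ be an $R$-matrix on $\mathbb{C}^3\otimes\mathbb{C}^3$ with arbitrary weights satisfying the Yang–Baxter equation $R_{12}(\xi_1,\xi_2)R_{13}(\xi_1,\xi_3)R_{23}(\xi_2,\xi_3)=R_{23}(\xi_2,\xi_3)R_{13}(\xi_1,\xi_3)R_{12}(\xi_1,\xi_2)$ and unitarity $R_{12}(\xi_1,\xi_2)R_{21}(\xi_2,\xi_1)=\mathcal I\otimes\mathcal I$. Let $\mathcal T_{a,1\dots L}(\mu)=R_{aL}(\mu,\xi_L)R_{a(L-1)}(\mu,\xi_{L-1})\cdots R_{a1}(\mu,\xi_1)$ be the monodromy matrix, regarded as a $3\times3$ matrix in the auxiliary space $\mathcal A_a$ with operator entries on $V_1\otimes\cdots\otimes V_L$, and let $D_{1\dots L}(\mu)$ be its $(3,3)$ entry. Let $$\mathcal F_{1\dots L}=\sum_{\sigma\in S_L}\ \sum^{*}_{1\le\alpha_{\sigma(1)},\dots,\alpha_{\sigma(L)}\le 3}\ \bigotimes_{i=1}^L e^{(\alpha_i\alpha_i)}_i\ R^{\{\sigma\}}_{1\dots L},$$ where the starred sum is over sequences with $\alpha_{\sigma(i)}\le\alpha_{\sigma(i+1)}$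 when $\sigma(i)<\sigma(i+1)$ and $\alpha_{\sigma(i)}<\alpha_{\sigma(i+1)}$ when $\sigma(i)>\sigma(i+1)$. Then $$\mathcal F_{1\dots L}\,D_{1\dots L}(\mu)=\Big(\bigotimes_{i=1}^L\mathrm{diag}\{b_{31}(\mu,\xi_i),\,b_{32}(\mu,\xi_i),\,a_3(\mu,\xi_i)\}_i\Big)\,\mathcal F_{1\dots L};$$ in particular, when $\mathcal F_{1\dots L}$ is invertible, the twisted operator $\tilde D_{1\dots L}(\mu)=\mathcal F_{1\dots L}D_{1\dots L}(\mu)\mathcal F^{-1}_{1\dots L}$ equals $\bigotimes_{i=1}^L\mathrm{diag}\{b_{31}(\mu,\xi_i),b_{32}(\mu,\xi_i),a_3(\mu,\xi_i)\}_i$.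
   Context: $e^{(\alpha\beta)}_j$ is the $3\times3$ Weyl matrix (1 in entry $(\alpha,\beta)$) acting on the $j$-th factor $V_j\cong\mathbb{C}^3$; $\mathrm{diag}\{x,y,z\}_i$ is the diagonal $3\times 3$ matrix acting on $V_i$. $R_{jk}$ denotes the $R$-matrix acting on factors $j,k$ with parameters $\xi_j,\xi_k$ (with $\mu$ for the auxiliary space $a$); $P_{\alpha(\alpha+1)}$ permutes the factors $V_\alpha,V_{\alpha+1}$. For $\sigma=\sigma_{\alpha_p(\alpha_p+1)}\cdots\sigma_{\alpha_1(\alpha_1+1)}$ a minimal decomposition into adjacent transpositions, $R^{\{\sigma\}}_{1\dots L}=P_{\alpha_p(\alpha_p+1)}\cdots P_{\alpha_1(\alpha_1+1)}\hat R_{\alpha_1}\cdots\hat R_{\alpha_p}$ with $\hat R_\alpha=P_{\alpha(\alpha+1)}R_{\alpha(\alpha+1)}(\xi_\alpha,\xi_{\alpha+1})$; $R^{\{\mathrm{id}\}}$ is the identity. *)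

theory Defs
  imports Complex_Main "HOL-Combinatorics.Permutations"
begin

(* A basis state of the tensor
   product of copies of C^3 indexed by a finite set I of sites is a function
   s : I -> {1,2,3} (extensional).  An operator is given by its matrix entries
   A s t = <s| A |t>. *)

type_synonym state = "nat \<Rightarrow> nat"
type_synonym op = "state \<Rightarrow> state \<Rightarrow> complex"

definition states :: "nat set \<Rightarrow> state set" where
  "states I = (\<Pi>\<^sub>E i\<in>I. {1,2,3})"

definition opmult :: "nat set \<Rightarrow> op \<Rightarrow> op \<Rightarrow> op" where
  "opmult I A B = (\<lambda>s t. \<Sum>u\<in>states I. A s u * B u t)"

definition opid :: op where
  "opid = (\<lambda>s t. if s = t then 1 else 0)"

definition opeq :: "nat set \<Rightarrow> op \<Rightarrow> op \<Rightarrow> bool" where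
  "opeq I A B \<longleftrightarrow> (\<forall>s\<in>states I. \<forall>t\<in>states I. A s t = B s t)"

(* local R-matrix entries <al be| R(x,y) |ga de> on C^3 (x) C^3:
   R = sum_i a_i e^(ii)(x)e^(ii) + sum_{i<>j} b_ij e^(ii)(x)e^(jj) + sum_{i<>j} c_ij e^(ij)(x)e^(ji) *)
definition Rloc ::
  "(nat \<Rightarrow> complex \<Rightarrow> complex \<Rightarrow> complex) \<Rightarrow>
   (nat \<Rightarrow> nat \<Rightarrow> complex \<Rightarrow> complex \<Rightarrow> complex) \<Rightarrow>
   (nat \<Rightarrow> nat \<Rightarrow> complex \<Rightarrow> complex \<Rightarrow> complex) \<Rightarrow>
   complex \<Rightarrow> complex \<Rightarrow> nat \<Rightarrow> nat \<Rightarrow> nat \<Rightarrow> nat \<Rightarrow> complex" where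
  "Rloc a b c x y al be ga de =
     (if al = be \<and> be = ga \<and> ga = de then a al x y
      else if al = ga \<and> be = de then b al be x y
      else if al = de \<and> be = ga then c al be x y
      else 0)"

(* a two-site operator M acting on factors j,k (first tensor slot on factor j) *)
definition emb :: "nat set \<Rightarrow> nat \<Rightarrow> nat \<Rightarrow> (nat \<Rightarrow> nat \<Rightarrow> nat \<Rightarrow> nat \<Rightarrow> complex) \<Rightarrow> op" where
  "emb I j k M = (\<lambda>s t. if (\<forall>i\<in>I - {j,k}. s i = t i) then M (s j) (s k) (t j) (t k) else 0)"

definition Rop where
  "Rop a b c I j k x y = emb I j k (Rloc a b c x y)"

definition Pop :: "nat \<Rightarrow> nat \<Rightarrow> op" where
  "Pop j k = (\<lambda>s t. if s = t \<circ> Transposition.transpose j k then 1 else 0)"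

definition YBE where
  "YBE a b c \<longleftrightarrow> (\<forall>x1 x2 x3.
     opeq {1,2,3}
       (opmult {1,2,3} (opmult {1,2,3} (Rop a b c {1,2,3} 1 2 x1 x2) (Rop a b c {1,2,3} 1 3 x1 x3))
          (Rop a b c {1,2,3} 2 3 x2 x3))
       (opmult {1,2,3} (opmult {1,2,3} (Rop a b c {1,2,3} 2 3 x2 x3) (Rop a b c {1,2,3} 1 3 x1 x3))
          (Rop a b c {1,2,3} 1 2 x1 x2)))"

definition unitary_R where
  "unitary_R a b c \<longleftrightarrow> (\<forall>x1 x2.
     opeq {1,2} (opmult {1,2} (Rop a b c {1,2} 1 2 x1 x2) (Rop a b c {1,2} 2 1 x2 x1)) opid)"

(* Monodromy matrix on A_a (x) V_1 (x) ... (x) V_n, auxiliary space = site 0: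
   T(mu) = R_{a n}(mu,xi_n) ... R_{a 1}(mu,xi_1), computed in the space of sites {0..L} *)
fun monodromy where
  "monodromy a b c L xi mu 0 = opid"
| "monodromy a b c L xi mu (Suc n) =
     opmult {0..L} (Rop a b c {0..L} 0 (Suc n) mu (xi (Suc n))) (monodromy a b c L xi mu n)"

definition Dop where
  "Dop a b c L xi mu = (\<lambda>s t. monodromy a b c L xi mu L (s(0 := 3)) (t(0 := 3)))"

(* sigma = sigma_{al_p(al_p+1)} o ... o sigma_{al_1(al_1+1)} for the word [al_1,...,al_p] *)
definition word_perm :: "nat list \<Rightarrow> nat \<Rightarrow> nat" where
  "word_perm w = fold (\<lambda>al f. Transposition.transpose al (Suc al) \<circ> f) w id"

definition reduced_word :: "nat \<Rightarrow> nat list \<Rightarrow> (nat \<Rightarrow> nat) \<Rightarrow> bool" where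
  "reduced_word L w \<sigma> \<longleftrightarrow> set w \<subseteq> {1..<L} \<and> word_perm w = \<sigma> \<and>
     (\<forall>w'. set w' \<subseteq> {1..<L} \<and> word_perm w' = \<sigma> \<longrightarrow> length w \<le> length w')"

(* hat R_al = P_{al(al+1)} R_{al(al+1)}, where the spectral parameters are those
   carried by the factors currently sitting in positions al, al+1; pos maps a
   position to the label of the factor currently sitting there *)
definition hatR where
  "hatR a b c I xi al (pos :: nat \<Rightarrow> nat) =
     opmult I (Pop al (Suc al)) (Rop a b c I al (Suc al) (xi (pos al)) (xi (pos (Suc al))))"

(* hatprod [al_p, ..., al_1] id = hat R_{al_1} ... hat R_{al_p}  (hat R_{al_p} acts first) *)
fun hatprod where
  "hatprod a b c I xi [] pos = opid"
| "hatprod a b c I xi (al # rest) pos =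
     opmult I (hatprod a b c I xi rest (pos \<circ> Transposition.transpose al (Suc al))) (hatR a b c I xi al pos)"

fun pprod where
  "pprod I [] = opid"
| "pprod I (al # rest) = opmult I (pprod I rest) (Pop al (Suc al))"

definition Rword where
  "Rword a b c I xi w = opmult I (pprod I w) (hatprod a b c I xi (rev w) id)"

definition Rsigma where
  "Rsigma a b c L xi \<sigma> = Rword a b c {1..L} xi (SOME w. reduced_word L w \<sigma>)"

definition proj :: "state \<Rightarrow> op" where
  "proj al = (\<lambda>s t. if s = al \<and> t = al then 1 else 0)"

definition admissible :: "nat \<Rightarrow> (nat \<Rightarrow> nat) \<Rightarrow> state \<Rightarrow> bool" where
  "admissible L \<sigma> al \<longleftrightarrow> (\<forall>i\<in>{1..<L}.
      (\<sigma> i < \<sigma> (Suc i) \<longrightarrow> al (\<sigma> i) \<le> al (\<sigma> (Suc i))) \<and>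
      (\<sigma> i > \<sigma> (Suc i) \<longrightarrow> al (\<sigma> i) < al (\<sigma> (Suc i))))"

definition Fop where
  "Fop a b c L xi = (\<lambda>s t. \<Sum>\<sigma>\<in>{\<sigma>. \<sigma> permutes {1..L}}.
      \<Sum>al\<in>{al\<in>states {1..L}. admissible L \<sigma> al}. opmult {1..L} (proj al) (Rsigma a b c L xi \<sigma>) s t)"

definition diagloc where
  "diagloc a b mu x v = (if v = 1 then b 3 1 mu x else if v = 2 then b 3 2 mu x else a 3 mu x)"

definition Diagop where
  "Diagop a b L xi mu = (\<lambda>s t. if s = t then (\<Prod>i\<in>{1..L}. diagloc a b mu (xi i) (s i)) else 0)"

end

theory Submission
  imports Defs
begin


lemma states_iff: "s \<in> states I \<longleftrightarrow> (\<forall>i\<in>I. s i \<in> {1,2,3}) \<and> (\<forall>i. i \<notin> I \<longrightarrow> s i = undefined)"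
  unfolding states_def PiE_iff extensional_def by auto

lemma finite_states: "finite I \<Longrightarrow> finite (states I)"
  unfolding states_def by (rule finite_PiE) auto

lemma states_upd: "s \<in> states I \<Longrightarrow> j \<in> I \<Longrightarrow> g \<in> {1,2,3} \<Longrightarrow> s(j:=g) \<in> states I"
  unfolding states_iff by auto

lemma sum_emb:
  assumes I: "finite I" and "j \<in> I" "k \<in> I" "j \<noteq> k" "s \<in> states I"
  shows "(\<Sum>u\<in>states I. emb I j k M s u * f u) =
         (\<Sum>g\<in>{1,2,3::nat}. \<Sum>h\<in>{1,2,3::nat}. M (s j) (s k) g h * f (s(j:=g, k:=h)))"
proof -
  let ?m = "\<lambda>(g,h). s(j:=g, k:=h)"
  have inj: "inj_on ?m ({1,2,3::nat} \<times> {1,2,3::nat})"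
    using assms(4) by (auto simp: inj_on_def fun_eq_iff)
  have sub: "?m ` ({1,2,3} \<times> {1,2,3}) \<subseteq> states I"
    using assms by (auto simp: states_iff)
  have "(\<Sum>g\<in>{1,2,3::nat}. \<Sum>h\<in>{1,2,3::nat}. M (s j) (s k) g h * f (s(j:=g, k:=h)))
      = (\<Sum>(g,h)\<in>{1,2,3::nat} \<times> {1,2,3::nat}. M (s j) (s k) g h * f (s(j:=g, k:=h)))"
    by (simp add: sum.cartesian_product)
  also have "\<dots> = (\<Sum>(g,h)\<in>{1,2,3::nat} \<times> {1,2,3::nat}. emb I j k M s (?m (g,h)) * f (?m (g,h)))"
    using assms(4) by (intro sum.cong) (auto simp: emb_def)
  also have "\<dots> = (\<Sum>u\<in>?m ` ({1,2,3} \<times> {1,2,3}). emb I j k M s u * f u)"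
    using sum.reindex[OF inj, of "\<lambda>u. emb I j k M s u * f u"] by (simp add: case_prod_beta)
  also have "\<dots> = (\<Sum>u\<in>states I. emb I j k M s u * f u)"
  proof (rule sum.mono_neutral_left[OF finite_states[OF I] sub], rule ballI)
    fix u assume u: "u \<in> states I - ?m ` ({1,2,3} \<times> {1,2,3})"
    show "emb I j k M s u * f u = 0"
    proof (cases "\<forall>i\<in>I - {j,k}. s i = u i")
      case True
      have "u = s(j:=u j, k:=u k)"
      proof
        fix i show "u i = (s(j:=u j, k:=u k)) i"
          using True u assms(5) by (cases "i \<in> I") (auto simp: states_iff)
      qed
      moreover have "u j \<in> {1,2,3}" "u k \<in> {1,2,3}" using u assms by (auto simp: states_iff)
      ultimately have "u \<in> ?m ` ({1,2,3} \<times> {1,2,3})" by (metis (no_types, lifting) SigmaI case_prod_conv image_eqI)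
      then show ?thesis using u by blast
    qed (auto simp: emb_def)
  qed
  finally show ?thesis ..
qed

lemma opmult_assoc: "opmult I (opmult I A B) C = opmult I A (opmult I B C)"
  unfolding opmult_def
  by (auto simp: fun_eq_iff sum_distrib_left sum_distrib_right mult.assoc intro: sum.swap)

definition opsum :: "nat set \<Rightarrow> (nat \<Rightarrow> op) \<Rightarrow> op" where
  "opsum P F = (\<lambda>s t. \<Sum>p\<in>P. F p s t)"

lemma opmult_sum_right: "opmult I A (opsum P F) = opsum P (\<lambda>p. opmult I A (F p))"
  unfolding opmult_def opsum_def
  by (auto simp: fun_eq_iff sum_distrib_left intro: sum.swap)

lemma opmult_sum_left: "opmult I (opsum P F) B = opsum P (\<lambda>p. opmult I (F p) B)"
  unfolding opmult_def opsum_def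
  by (auto simp: fun_eq_iff sum_distrib_right intro: sum.swap)

lemma opeq_refl[simp]: "opeq I A A" by (simp add: opeq_def)
lemma opeq_sym: "opeq I A B \<Longrightarrow> opeq I B A" by (simp add: opeq_def)
lemma opeq_trans[trans]: "opeq I A B \<Longrightarrow> opeq I B C \<Longrightarrow> opeq I A C" by (simp add: opeq_def)
lemma opeq_eq_trans[trans]: "opeq I A B \<Longrightarrow> B = C \<Longrightarrow> opeq I A C" by simp
lemma eq_opeq_trans[trans]: "A = B \<Longrightarrow> opeq I B C \<Longrightarrow> opeq I A C" by simp

lemma opeq_mult: "opeq I A A' \<Longrightarrow> opeq I B B' \<Longrightarrow> opeq I (opmult I A B) (opmult I A' B')"
  unfolding opeq_def opmult_def by (auto intro!: sum.cong)

lemma opeq_sum: "(\<And>p. p \<in> P \<Longrightarrow> opeq I (F p) (F' p)) \<Longrightarrow> opeq I (opsum P F) (opsum P F')"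
  unfolding opeq_def opsum_def by (auto intro!: sum.cong)

lemma mult_delta: "(if P then 1 else 0) * (x::complex) = (if P then x else 0)"
  "(x::complex) * (if P then 1 else 0) = (if P then x else 0)" by simp_all

lemma opid_left: "finite I \<Longrightarrow> opeq I (opmult I opid A) A"
  unfolding opeq_def opmult_def opid_def by (simp add: finite_states mult_delta)

lemma opid_right: "finite I \<Longrightarrow> opeq I (opmult I A opid) A"
  unfolding opeq_def opmult_def opid_def by (simp add: finite_states mult_delta)

definition Rsite where
  "Rsite a b c mu I j x k m = (\<lambda>s t. if (\<forall>i\<in>I-{j}. s i = t i) then Rloc a b c mu x k (s j) m (t j) else 0)"

fun G where
  "G a b c mu I [] k l = (if k = l then opid else (\<lambda>s t. 0))"
| "G a b c mu I ((j,x)#rest) k l = opsum {1,2,3} (\<lambda>m. opmult I (Rsite a b c mu I j x k m) (G a b c mu I rest m l))"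

lemma sum_site:
  assumes I: "finite I" and "j \<in> I" "s \<in> states I"
  shows "(\<Sum>u\<in>states I. Rsite a b c mu I j x k m s u * f u) =
         (\<Sum>h\<in>{1,2,3::nat}. Rloc a b c mu x k (s j) m h * f (s(j:=h)))"
proof -
  let ?m = "\<lambda>h. s(j:=h)"
  have inj: "inj_on ?m {1,2,3::nat}"
    by (auto simp: inj_on_def fun_eq_iff)
  have sub: "?m ` {1,2,3} \<subseteq> states I"
    using assms by (auto simp: states_iff)
  have "(\<Sum>h\<in>{1,2,3::nat}. Rloc a b c mu x k (s j) m h * f (s(j:=h)))
      = (\<Sum>h\<in>{1,2,3::nat}. Rsite a b c mu I j x k m s (?m h) * f (?m h))"
    by (intro sum.cong) (auto simp: Rsite_def)
  also have "\<dots> = (\<Sum>u\<in>?m ` {1,2,3}. Rsite a b c mu I j x k m s u * f u)"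
    using sum.reindex[OF inj, of "\<lambda>u. Rsite a b c mu I j x k m s u * f u"] by simp
  also have "\<dots> = (\<Sum>u\<in>states I. Rsite a b c mu I j x k m s u * f u)"
  proof (rule sum.mono_neutral_left[OF finite_states[OF I] sub], rule ballI)
    fix u assume u: "u \<in> states I - ?m ` {1,2,3}"
    show "Rsite a b c mu I j x k m s u * f u = 0"
    proof (cases "\<forall>i\<in>I - {j}. s i = u i")
      case True
      have "u = s(j:=u j)"
      proof
        fix i show "u i = (s(j:=u j)) i"
          using True u assms(3) by (cases "i \<in> I") (auto simp: states_iff)
      qed
      moreover have "u j \<in> {1,2,3}" using u assms by (auto simp: states_iff)
      ultimately have "u \<in> ?m ` {1,2,3}" by blast
      then show ?thesis using u by blast
    qed (auto simp: Rsite_def)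
  qed
  finally show ?thesis ..
qed

lemma transpose_states: "s \<in> states I \<Longrightarrow> j \<in> I \<Longrightarrow> k \<in> I \<Longrightarrow> s \<circ> Transposition.transpose j k \<in> states I"
  unfolding states_iff by (auto simp: transpose_def)

lemma sum_Pop:
  assumes I: "finite I" and "j \<in> I" "k \<in> I" "s \<in> states I"
  shows "(\<Sum>u\<in>states I. Pop j k s u * f u) = f (s \<circ> Transposition.transpose j k)"
proof -
  have "\<And>u. (s = u \<circ> Transposition.transpose j k) = (s \<circ> Transposition.transpose j k = u)"
    by (auto simp: fun_eq_iff transpose_def)
  then have "(\<Sum>u\<in>states I. Pop j k s u * f u) = (\<Sum>u\<in>states I. if s \<circ> Transposition.transpose j k = u then f u else 0)"
    by (simp add: Pop_def mult_delta)
  also have "\<dots> = f (s \<circ> Transposition.transpose j k)"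
    using transpose_states[OF assms(4,2,3)] by (simp add: finite_states[OF I])
  finally show ?thesis .
qed

lemma sum_opid:
  assumes I: "finite I" and "s \<in> states I"
  shows "(\<Sum>u\<in>states I. opid s u * f u) = f s"
  using assms by (simp add: opid_def mult_delta finite_states)

lemma mono_G:
  assumes "n \<le> L" "k \<in> {1,2,3}" "l \<in> {1,2,3}" "s \<in> states {1..L}" "t \<in> states {1..L}"
  shows "monodromy a b c L xi mu n (s(0:=k)) (t(0:=l)) =
         G a b c mu {1..L} (map (\<lambda>i. (i, xi i)) (rev [1..<Suc n])) k l s t"
  using assms
proof (induction n arbitrary: k s)
  case 0
  have "s(0:=k) = t(0:=l) \<longleftrightarrow> k = l \<and> s = t"
    using 0 by (auto simp: fun_eq_iff states_iff)
  then have "opid (s(0:=k)) (t(0:=l)) = (if k = l then opid s t else 0)"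
    by (simp only: opid_def) auto
  moreover have "G a b c mu {1..L} (map (\<lambda>i. (i, xi i)) (rev [1..<Suc 0])) k l = (if k = l then opid else (\<lambda>s t. 0))" by simp
  ultimately show ?case by (simp only: monodromy.simps) simp
next
  case (Suc n)
  have sk: "s(0:=k) \<in> states {0..L}" using Suc.prems by (auto simp: states_iff)
  have "monodromy a b c L xi mu (Suc n) (s(0:=k)) (t(0:=l)) =
     (\<Sum>g\<in>{1,2,3::nat}. \<Sum>h\<in>{1,2,3::nat}. Rloc a b c mu (xi (Suc n)) k (s (Suc n)) g h *
         monodromy a b c L xi mu n ((s(0:=k))(0:=g, Suc n:=h)) (t(0:=l)))"
    using Suc.prems sk by (simp add: opmult_def Rop_def sum_emb)
  also have "\<dots> = (\<Sum>g\<in>{1,2,3::nat}. \<Sum>h\<in>{1,2,3::nat}. Rloc a b c mu (xi (Suc n)) k (s (Suc n)) g h *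
         G a b c mu {1..L} (map (\<lambda>i. (i, xi i)) (rev [1..<Suc n])) g l (s(Suc n:=h)) t)"
  proof (intro sum.cong refl)
    fix g h :: nat assume gh: "g \<in> {1,2,3}" "h \<in> {1,2,3}"
    have eq1: "(s(0:=k))(0:=g, Suc n:=h) = (s(Suc n:=h))(0:=g)" by (auto simp: fun_eq_iff)
    have st: "s(Suc n:=h) \<in> states {1..L}" using Suc.prems gh by (auto simp: states_iff)
    have "monodromy a b c L xi mu n ((s(Suc n:=h))(0:=g)) (t(0:=l)) =
         G a b c mu {1..L} (map (\<lambda>i. (i, xi i)) (rev [1..<Suc n])) g l (s(Suc n:=h)) t"
      by (rule Suc.IH[OF _ gh(1) _ st]) (use Suc.prems in auto)
    then show "Rloc a b c mu (xi (Suc n)) k (s (Suc n)) g h *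
         monodromy a b c L xi mu n ((s(0:=k))(0:=g, Suc n:=h)) (t(0:=l)) =
         Rloc a b c mu (xi (Suc n)) k (s (Suc n)) g h *
         G a b c mu {1..L} (map (\<lambda>i. (i, xi i)) (rev [1..<Suc n])) g l (s(Suc n:=h)) t"
      by (simp only: eq1)
  qed
  also have "\<dots> = G a b c mu {1..L} (map (\<lambda>i. (i, xi i)) (rev [1..<Suc (Suc n)])) k l s t"
    using Suc.prems by (simp add: opsum_def opmult_def sum_site sum_distrib_left mult.assoc)
  finally show ?case .
qed

lemma opsum_swap: "opsum P (\<lambda>p. opsum Q (\<lambda>q. F p q)) = opsum Q (\<lambda>q. opsum P (\<lambda>p. F p q))"
  unfolding opsum_def by (auto simp: fun_eq_iff intro: sum.swap)

lemma opmult_zero_left: "opmult I (\<lambda>s t. 0) B = (\<lambda>s t. 0)" by (simp add: opmult_def)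
lemma opmult_zero_right: "opmult I A (\<lambda>s t. 0) = (\<lambda>s t. 0)" by (simp add: opmult_def)

lemma opsum_delta: assumes "k \<in> P" "finite P" shows "opsum P (\<lambda>m. opmult I (if k = m then A else (\<lambda>s t. 0)) (B m)) = opmult I A (B k)"
proof -
  have "\<And>p x y. opmult I (if k = p then A else (\<lambda>s t. 0)) (B p) x y = (if k = p then opmult I A (B p) x y else 0)"
    by (simp add: opmult_zero_left)
  then show ?thesis unfolding opsum_def using assms by (simp add: fun_eq_iff)
qed

lemma G_append:
  assumes I: "finite I" and k: "k \<in> {1,2,3}"
  shows "opeq I (G a b c mu I (xs@ys) k l) (opsum {1,2,3} (\<lambda>m. opmult I (G a b c mu I xs k m) (G a b c mu I ys m l)))"
  using k
proof (induction xs arbitrary: k)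
  case Nil
  have "opsum {1,2,3} (\<lambda>m. opmult I (G a b c mu I [] k m) (G a b c mu I ys m l))
      = opmult I opid (G a b c mu I ys k l)"
    using Nil by (simp add: opsum_delta)
  then show ?case using opid_left[OF I] by (simp add: opeq_sym)
next
  case (Cons jx xs)
  obtain j x where jx: "jx = (j,x)" by fastforce
  have "opeq I (G a b c mu I (jx#xs@ys) k l)
     (opsum {1,2,3} (\<lambda>m. opmult I (Rsite a b c mu I j x k m)
        (opsum {1,2,3} (\<lambda>p. opmult I (G a b c mu I xs m p) (G a b c mu I ys p l)))))"
    unfolding jx G.simps by (intro opeq_sum opeq_mult opeq_refl Cons.IH) auto
  also have "\<dots> = opsum {1,2,3} (\<lambda>p. opmult I (G a b c mu I (jx#xs) k p) (G a b c mu I ys p l))"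
    unfolding jx G.simps opmult_sum_right opmult_sum_left opmult_assoc
    by (rule opsum_swap)
  finally show ?case by simp
qed

lemma G_intertwine:
  assumes I: "finite I"
    and H: "\<And>j x k m. (j,x) \<in> set list \<Longrightarrow> opeq I (opmult I A (Rsite a b c mu I j x k m)) (opmult I (Rsite a b c mu I (h j) x k m) A)"
  shows "opeq I (opmult I A (G a b c mu I list k l)) (opmult I (G a b c mu I (map (\<lambda>(j,x). (h j, x)) list) k l) A)"
  using H
proof (induction list arbitrary: k)
  case Nil
  show ?case
  proof (cases "k = l")
    case True
    then show ?thesis using opid_left[OF I] opid_right[OF I]
      by simp (meson opeq_sym opeq_trans)
  qed (simp add: opmult_zero_left opmult_zero_right)
next
  case (Cons jx r)
  obtain j x where jx: "jx = (j,x)" by fastforce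
  have "opmult I A (G a b c mu I (jx#r) k l) =
      opsum {1,2,3} (\<lambda>m. opmult I (opmult I A (Rsite a b c mu I j x k m)) (G a b c mu I r m l))"
    unfolding jx G.simps opmult_sum_right opmult_assoc ..
  also have "opeq I \<dots> (opsum {1,2,3} (\<lambda>m. opmult I (Rsite a b c mu I (h j) x k m) (opmult I A (G a b c mu I r m l))))"
    unfolding opmult_assoc[symmetric]
    by (intro opeq_sum opeq_mult opeq_refl Cons.prems) (auto simp: jx)
  also have "opeq I \<dots> (opsum {1,2,3} (\<lambda>m. opmult I (Rsite a b c mu I (h j) x k m) (opmult I (G a b c mu I (map (\<lambda>(j,x). (h j, x)) r) m l) A)))"
    by (intro opeq_sum opeq_mult opeq_refl Cons.IH Cons.prems) auto
  also have "\<dots> = opmult I (G a b c mu I (map (\<lambda>(j,x). (h j, x)) (jx#r)) k l) A"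
    unfolding jx by (simp add: opmult_sum_left opmult_assoc)
  finally show ?case .
qed

lemma hatR_eq:
  assumes I: "finite I" and "al \<in> I" "Suc al \<in> I" "s \<in> states I"
  shows "hatR a b c I xi al pos s u = emb I al (Suc al) (\<lambda>p q g h. Rloc a b c (xi (pos al)) (xi (pos (Suc al))) q p g h) s u"
  using assms unfolding hatR_def opmult_def
  by (simp add: sum_Pop Rop_def emb_def transpose_def)

lemma cond2: "al \<noteq> be \<Longrightarrow> al \<in> I - J \<Longrightarrow> be \<in> I - J \<Longrightarrow>
  (\<forall>i\<in>I-J. (s(al:=g, be:=h)) i = t i) \<longleftrightarrow> (g = t al \<and> h = t be \<and> (\<forall>i\<in>I-J-{al,be}. s i = t i))"
  by auto

lemma cond1: "j \<in> I - J \<Longrightarrow> (\<forall>i\<in>I-J. (s(j:=g)) i = t i) \<longleftrightarrow> (g = t j \<and> (\<forall>i\<in>I-J-{j}. s i = t i))"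
  by auto

lemma sum_delta_conj: "finite S \<Longrightarrow> c \<in> S \<Longrightarrow> (\<Sum>x\<in>S. if x = c \<and> P then f x else 0) = (if P then f c else (0::complex))"
proof -
  assume "finite S" "c \<in> S"
  have "(\<Sum>x\<in>S. if x = c \<and> P then f x else 0) = (\<Sum>x\<in>S. if x = c then (if P then f x else 0) else 0)"
    by (intro sum.cong) auto
  then show ?thesis using \<open>finite S\<close> \<open>c \<in> S\<close> by simp
qed

lemma sum2_collapse:
  assumes "a' \<in> {1,2,3::nat}" "b' \<in> {1,2,3::nat}"
  shows "(\<Sum>g\<in>{1,2,3::nat}. \<Sum>h\<in>{1,2,3::nat}. F g h * (if g = a' \<and> h = b' \<and> P then R else 0)) = (if P then F a' b' * R else (0::complex))"
proof -
  have "(\<Sum>g\<in>{1,2,3::nat}. \<Sum>h\<in>{1,2,3::nat}. F g h * (if g = a' \<and> h = b' \<and> P then R else 0))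
     = (\<Sum>g\<in>{1,2,3::nat}. if g = a' then (\<Sum>h\<in>{1,2,3::nat}. if h = b' then (if P then F g h * R else 0) else 0) else 0)"
    by (intro sum.cong) auto
  then show ?thesis using assms by (simp only: sum.delta' finite.intros) simp
qed

lemma sum1_collapse:
  assumes "a' \<in> {1,2,3::nat}"
  shows "(\<Sum>h\<in>{1,2,3::nat}. F h * (if h = a' \<and> P then R else 0)) = (if P then F a' * R else (0::complex))"
proof -
  have "(\<Sum>h\<in>{1,2,3::nat}. F h * (if h = a' \<and> P then R else 0))
     = (\<Sum>h\<in>{1,2,3::nat}. if h = a' then (if P then F h * R else 0) else 0)"
    by (intro sum.cong) auto
  then show ?thesis using assms by (simp only: sum.delta' finite.intros) simp
qed

lemma states_val: "s \<in> states I \<Longrightarrow> i \<in> I \<Longrightarrow> s i \<in> {1,2,3}"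
  by (simp add: states_iff)

lemma hatR_Rsite_comm:
  assumes I: "finite I" and al: "al \<in> I" "Suc al \<in> I" and j: "j \<in> I" "j \<noteq> al" "j \<noteq> Suc al"
  shows "opeq I (opmult I (hatR a b c I xi al pos) (Rsite a b c mu I j x k m))
                (opmult I (Rsite a b c mu I j x k m) (hatR a b c I xi al pos))"
  unfolding opeq_def
proof (intro ballI)
  fix s t assume s: "s \<in> states I" and t: "t \<in> states I"
  let ?M = "\<lambda>p q g h. Rloc a b c (xi (pos al)) (xi (pos (Suc al))) q p g h"
  have "opmult I (hatR a b c I xi al pos) (Rsite a b c mu I j x k m) s t
      = (\<Sum>u\<in>states I. emb I al (Suc al) ?M s u * Rsite a b c mu I j x k m u t)"
    unfolding opmult_def using hatR_eq[OF I al s] by simp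
  also have "\<dots> = (\<Sum>g\<in>{1,2,3::nat}. \<Sum>h\<in>{1,2,3::nat}. ?M (s al) (s (Suc al)) g h *
        (if g = t al \<and> h = t (Suc al) \<and> (\<forall>i\<in>I-{j}-{al, Suc al}. s i = t i) then Rloc a b c mu x k (s j) m (t j) else 0))"
  proof -
    have "(\<Sum>u\<in>states I. emb I al (Suc al) ?M s u * Rsite a b c mu I j x k m u t) =
      (\<Sum>g\<in>{1,2,3::nat}. \<Sum>h\<in>{1,2,3::nat}. ?M (s al) (s (Suc al)) g h * Rsite a b c mu I j x k m (s(al:=g, Suc al:=h)) t)"
      by (rule sum_emb[OF I al(1) al(2) _ s]) simp
    also have "\<dots> = (\<Sum>g\<in>{1,2,3::nat}. \<Sum>h\<in>{1,2,3::nat}. ?M (s al) (s (Suc al)) g h *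
        (if g = t al \<and> h = t (Suc al) \<and> (\<forall>i\<in>I-{j}-{al, Suc al}. s i = t i) then Rloc a b c mu x k (s j) m (t j) else 0))"
    proof (intro sum.cong refl)
      fix g h
      have "(\<forall>i\<in>I-{j}. (s(al:=g, Suc al:=h)) i = t i) \<longleftrightarrow> (g = t al \<and> h = t (Suc al) \<and> (\<forall>i\<in>I-{j}-{al, Suc al}. s i = t i))"
        by (rule cond2) (use al j in auto)
      moreover have "(s(al:=g, Suc al:=h)) j = s j" using j by simp
      ultimately show "?M (s al) (s (Suc al)) g h * Rsite a b c mu I j x k m (s(al:=g, Suc al:=h)) t = ?M (s al) (s (Suc al)) g h *
        (if g = t al \<and> h = t (Suc al) \<and> (\<forall>i\<in>I-{j}-{al, Suc al}. s i = t i) then Rloc a b c mu x k (s j) m (t j) else 0)"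
        unfolding Rsite_def by (simp only:)
    qed
    finally show ?thesis .
  qed
  also have "\<dots> = (if (\<forall>i\<in>I-{j}-{al, Suc al}. s i = t i) then ?M (s al) (s (Suc al)) (t al) (t (Suc al)) * Rloc a b c mu x k (s j) m (t j) else 0)"
    using sum2_collapse[OF states_val[OF t al(1)] states_val[OF t al(2)]] .
  finally have L: "opmult I (hatR a b c I xi al pos) (Rsite a b c mu I j x k m) s t = \<dots>" .
  have "opmult I (Rsite a b c mu I j x k m) (hatR a b c I xi al pos) s t
     = (\<Sum>h\<in>{1,2,3::nat}. Rloc a b c mu x k (s j) m h * hatR a b c I xi al pos (s(j:=h)) t)"
    unfolding opmult_def using assms s by (simp add: sum_site)
  also have "\<dots> = (\<Sum>h\<in>{1,2,3::nat}. Rloc a b c mu x k (s j) m h *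
        (if h = t j \<and> (\<forall>i\<in>I-{al, Suc al}-{j}. s i = t i) then ?M (s al) (s (Suc al)) (t al) (t (Suc al)) else 0))"
  proof (intro sum.cong refl)
    fix h :: nat assume h: "h \<in> {1,2,3}"
    have sh: "s(j:=h) \<in> states I" using s h j by (simp add: states_upd)
    show "Rloc a b c mu x k (s j) m h * hatR a b c I xi al pos (s(j:=h)) t = Rloc a b c mu x k (s j) m h *
        (if h = t j \<and> (\<forall>i\<in>I-{al, Suc al}-{j}. s i = t i) then ?M (s al) (s (Suc al)) (t al) (t (Suc al)) else 0)"
    proof -
      have c1: "(\<forall>i\<in>I-{al, Suc al}. (s(j:=h)) i = t i) \<longleftrightarrow> (h = t j \<and> (\<forall>i\<in>I-{al, Suc al}-{j}. s i = t i))"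
        by (rule cond1) (use j in auto)
      have "hatR a b c I xi al pos (s(j:=h)) t = emb I al (Suc al) ?M (s(j:=h)) t" by (rule hatR_eq[OF I al sh])
      also have "\<dots> = (if h = t j \<and> (\<forall>i\<in>I-{al, Suc al}-{j}. s i = t i) then ?M (s al) (s (Suc al)) (t al) (t (Suc al)) else 0)"
        unfolding emb_def c1 using j by simp
      finally show ?thesis by simp
    qed
  qed
  also have "\<dots> = (if (\<forall>i\<in>I-{al, Suc al}-{j}. s i = t i) then Rloc a b c mu x k (s j) m (t j) * ?M (s al) (s (Suc al)) (t al) (t (Suc al)) else 0)"
    using sum1_collapse[OF states_val[OF t j(1)]] .
  finally show "opmult I (hatR a b c I xi al pos) (Rsite a b c mu I j x k m) s t =
     opmult I (Rsite a b c mu I j x k m) (hatR a b c I xi al pos) s t"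
    unfolding L by (simp add: Diff_insert2[symmetric] insert_commute mult.commute)
qed

lemma pop_cond:
  assumes "al \<in> I" "be \<in> I" "j \<in> I" "s \<in> states I" "t \<in> states I"
  shows "(s(Transposition.transpose al be j := h) = t \<circ> Transposition.transpose al be) \<longleftrightarrow>
         (h = t j \<and> (\<forall>i\<in>I-{j}. s (Transposition.transpose al be i) = t i))"
proof
  assume H: "s(Transposition.transpose al be j := h) = t \<circ> Transposition.transpose al be"
  have "h = t j" using fun_cong[OF H, of "Transposition.transpose al be j"] by simp
  moreover have "\<forall>i\<in>I-{j}. s (Transposition.transpose al be i) = t i"
  proof
    fix i assume "i \<in> I - {j}"
    then have "Transposition.transpose al be i \<noteq> Transposition.transpose al be j" by (auto simp: transpose_def split: if_splits)
    then show "s (Transposition.transpose al be i) = t i"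
      using fun_cong[OF H, of "Transposition.transpose al be i"] by simp
  qed
  ultimately show "h = t j \<and> (\<forall>i\<in>I-{j}. s (Transposition.transpose al be i) = t i)" ..
next
  assume H: "h = t j \<and> (\<forall>i\<in>I-{j}. s (Transposition.transpose al be i) = t i)"
  show "s(Transposition.transpose al be j := h) = t \<circ> Transposition.transpose al be"
  proof
    fix i
    show "(s(Transposition.transpose al be j := h)) i = (t \<circ> Transposition.transpose al be) i"
    proof (cases "i = Transposition.transpose al be j")
      case True then show ?thesis using H by simp
    next
      case False
      show ?thesis
      proof (cases "i \<in> I")
        case True
        let ?i = "Transposition.transpose al be i"
        have "?i \<in> I - {j}" using True False assms(1,2) by (auto simp: transpose_def split: if_splits)
        then have "s (Transposition.transpose al be ?i) = t ?i" using H by blast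
        then show ?thesis using False by simp
      next
        case nI: False
        then have "Transposition.transpose al be i = i" using assms(1,2) by (auto simp: transpose_def)
        then show ?thesis using nI False assms(4,5) by (simp add: states_iff)
      qed
    qed
  qed
qed

lemma Pop_Rsite:
  assumes I: "finite I" and ab: "al \<in> I" "be \<in> I" and j: "j \<in> I"
  shows "opeq I (opmult I (Pop al be) (Rsite a b c mu I j x k m))
                (opmult I (Rsite a b c mu I (Transposition.transpose al be j) x k m) (Pop al be))"
  unfolding opeq_def
proof (intro ballI)
  fix s t assume s: "s \<in> states I" and t: "t \<in> states I"
  let ?T = "Transposition.transpose al be"
  have tj: "?T j \<in> I" using ab j by (auto simp: transpose_def)
  have "opmult I (Pop al be) (Rsite a b c mu I j x k m) s t = Rsite a b c mu I j x k m (s \<circ> ?T) t"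
    unfolding opmult_def using sum_Pop[OF I ab s] .
  also have "\<dots> = (if (\<forall>i\<in>I-{j}. s (?T i) = t i) then Rloc a b c mu x k (s (?T j)) m (t j) else 0)"
    by (simp add: Rsite_def)
  finally have L: "opmult I (Pop al be) (Rsite a b c mu I j x k m) s t = \<dots>" .
  have "opmult I (Rsite a b c mu I (?T j) x k m) (Pop al be) s t
     = (\<Sum>h\<in>{1,2,3::nat}. Rloc a b c mu x k (s (?T j)) m h * Pop al be (s(?T j:=h)) t)"
    unfolding opmult_def using sum_site[OF I tj s] .
  also have "\<dots> = (\<Sum>h\<in>{1,2,3::nat}. Rloc a b c mu x k (s (?T j)) m h *
        (if h = t j \<and> (\<forall>i\<in>I-{j}. s (?T i) = t i) then 1 else 0))"
    unfolding Pop_def using pop_cond[OF ab j s t] by simp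
  also have "\<dots> = (if (\<forall>i\<in>I-{j}. s (?T i) = t i) then Rloc a b c mu x k (s (?T j)) m (t j) * 1 else 0)"
    using sum1_collapse[OF states_val[OF t j]] .
  finally show "opmult I (Pop al be) (Rsite a b c mu I j x k m) s t =
      opmult I (Rsite a b c mu I (?T j) x k m) (Pop al be) s t" unfolding L by simp
qed

lemma opsum_delta_right:
  assumes "l \<in> P" "finite P"
  shows "opsum P (\<lambda>n. opmult I (A n) (if n = l then B else (\<lambda>s t. 0))) = opmult I (A l) B"
proof -
  have "\<And>p x y. opmult I (A p) (if p = l then B else (\<lambda>s t. 0)) x y = (if p = l then opmult I (A p) B x y else 0)"
    by (simp add: opmult_zero_right)
  then show ?thesis unfolding opsum_def using assms by (simp add: fun_eq_iff)
qed

lemma G1: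
  assumes I: "finite I" and l: "l \<in> {1,2,3}"
  shows "opeq I (G a b c mu I [(j,x)] k l) (Rsite a b c mu I j x k l)"
proof -
  have "G a b c mu I [(j,x)] k l = opmult I (Rsite a b c mu I j x k l) opid"
    using l by (simp add: opsum_delta_right)
  then show ?thesis using opid_right[OF I] by simp
qed

lemma emb_cong: "opeq I (emb I j k M) (emb I j k M')" if "\<And>p q g h. p \<in> {1,2,3} \<Longrightarrow> q \<in> {1,2,3} \<Longrightarrow> g \<in> {1,2,3} \<Longrightarrow> h \<in> {1,2,3} \<Longrightarrow> M p q g h = M' p q g h"
  "j \<in> I" "k \<in> I"
  unfolding opeq_def emb_def
proof (intro ballI)
  fix s t assume "s \<in> states I" "t \<in> states I"
  then have "s j \<in> {1,2,3}" "s k \<in> {1,2,3}" "t j \<in> {1,2,3}" "t k \<in> {1,2,3}" using that(2,3) states_val by blast+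
  then show "(if \<forall>i\<in>I - {j, k}. s i = t i then M (s j) (s k) (t j) (t k) else 0) =
           (if \<forall>i\<in>I - {j, k}. s i = t i then M' (s j) (s k) (t j) (t k) else 0)" using that(1) by simp
qed

lemma sum_if_cond: "(\<Sum>m\<in>S. if P then X m else 0) = (if P then (\<Sum>m\<in>S. X m) else (0::complex))"
  by (cases P) simp_all

lemma mult_if0: "(x::complex) * (if P then y else 0) = (if P then x * y else 0)" by simp

lemma set_diff2: "I - {j} - {k} = I - {j,k}" by auto

lemma G2_emb:
  assumes I: "finite I" and ab: "al \<in> I" "be \<in> I" "al \<noteq> be" and l: "l \<in> {1,2,3}"
  shows "opeq I (G a b c mu I [(be,y),(al,x)] k l)
    (emb I al be (\<lambda>p q g h. \<Sum>m\<in>{1,2,3::nat}. Rloc a b c mu y k q m h * Rloc a b c mu x m p l g))"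
proof -
  have "opeq I (G a b c mu I [(be,y),(al,x)] k l)
      (opsum {1,2,3} (\<lambda>m. opmult I (Rsite a b c mu I be y k m) (Rsite a b c mu I al x m l)))"
    unfolding G.simps(2)[of _ _ _ _ _ be y]
    by (intro opeq_sum opeq_mult opeq_refl) (use G1[OF I l, of _ _ _ _ al x] in \<open>simp\<close>)
  also have "opeq I \<dots> (emb I al be (\<lambda>p q g h. \<Sum>m\<in>{1,2,3::nat}. Rloc a b c mu y k q m h * Rloc a b c mu x m p l g))"
    unfolding opeq_def
  proof (intro ballI)
    fix s t assume s: "s \<in> states I" and t: "t \<in> states I"
    have eqm: "\<And>m. opmult I (Rsite a b c mu I be y k m) (Rsite a b c mu I al x m l) s t =
       (if (\<forall>i\<in>I-{al,be}. s i = t i) then Rloc a b c mu y k (s be) m (t be) * Rloc a b c mu x m (s al) l (t al) else 0)"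
    proof -
      fix m
      have "opmult I (Rsite a b c mu I be y k m) (Rsite a b c mu I al x m l) s t =
        (\<Sum>h\<in>{1,2,3::nat}. Rloc a b c mu y k (s be) m h * Rsite a b c mu I al x m l (s(be:=h)) t)"
        unfolding opmult_def using sum_site[OF I ab(2) s] .
      also have "\<dots> = (\<Sum>h\<in>{1,2,3::nat}. Rloc a b c mu y k (s be) m h *
           (if h = t be \<and> (\<forall>i\<in>I-{al}-{be}. s i = t i) then Rloc a b c mu x m (s al) l (t al) else 0))"
      proof (intro sum.cong refl)
        fix h
        have c1: "(\<forall>i\<in>I-{al}. (s(be:=h)) i = t i) \<longleftrightarrow> (h = t be \<and> (\<forall>i\<in>I-{al}-{be}. s i = t i))"
          by (rule cond1) (use ab in auto)
        show "Rloc a b c mu y k (s be) m h * Rsite a b c mu I al x m l (s(be:=h)) t = Rloc a b c mu y k (s be) m h *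
           (if h = t be \<and> (\<forall>i\<in>I-{al}-{be}. s i = t i) then Rloc a b c mu x m (s al) l (t al) else 0)"
          unfolding Rsite_def c1 using ab by simp
      qed
      also have "\<dots> = (if (\<forall>i\<in>I-{al}-{be}. s i = t i) then Rloc a b c mu y k (s be) m (t be) * Rloc a b c mu x m (s al) l (t al) else 0)"
        using sum1_collapse[OF states_val[OF t ab(2)]] .
      finally show "opmult I (Rsite a b c mu I be y k m) (Rsite a b c mu I al x m l) s t =
       (if (\<forall>i\<in>I-{al,be}. s i = t i) then Rloc a b c mu y k (s be) m (t be) * Rloc a b c mu x m (s al) l (t al) else 0)"
        by (simp only: set_diff2)
    qed
    show "opsum {1,2,3} (\<lambda>m. opmult I (Rsite a b c mu I be y k m) (Rsite a b c mu I al x m l)) s t =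
      emb I al be (\<lambda>p q g h. \<Sum>m\<in>{1,2,3::nat}. Rloc a b c mu y k q m h * Rloc a b c mu x m p l g) s t"
      unfolding opsum_def emb_def eqm sum_if_cond ..
  qed
  finally show ?thesis .
qed

lemma emb_emb:
  assumes I: "finite I" and ab: "al \<in> I" "be \<in> I" "al \<noteq> be"
  shows "opeq I (opmult I (emb I al be M1) (emb I al be M2))
     (emb I al be (\<lambda>p q g h. \<Sum>g'\<in>{1,2,3::nat}. \<Sum>h'\<in>{1,2,3::nat}. M1 p q g' h' * M2 g' h' g h))"
  unfolding opeq_def
proof (intro ballI)
  fix s t assume s: "s \<in> states I" and t: "t \<in> states I"
  have "opmult I (emb I al be M1) (emb I al be M2) s t =
     (\<Sum>g'\<in>{1,2,3::nat}. \<Sum>h'\<in>{1,2,3::nat}. M1 (s al) (s be) g' h' * emb I al be M2 (s(al:=g', be:=h')) t)"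
    unfolding opmult_def using sum_emb[OF I ab s] .
  also have "\<dots> = (\<Sum>g'\<in>{1,2,3::nat}. \<Sum>h'\<in>{1,2,3::nat}. M1 (s al) (s be) g' h' *
       (if (\<forall>i\<in>I-{al,be}. s i = t i) then M2 g' h' (t al) (t be) else 0))"
    using ab by (intro sum.cong refl) (simp add: emb_def)
  also have "\<dots> = emb I al be (\<lambda>p q g h. \<Sum>g'\<in>{1,2,3::nat}. \<Sum>h'\<in>{1,2,3::nat}. M1 p q g' h' * M2 g' h' g h) s t"
    unfolding emb_def mult_if0 sum_if_cond ..
  finally show "opmult I (emb I al be M1) (emb I al be M2) s t = \<dots>" .
qed

lemma hatR_emb:
  assumes I: "finite I" and "al \<in> I" "Suc al \<in> I"
  shows "opeq I (hatR a b c I xi al pos) (emb I al (Suc al) (\<lambda>p q g h. Rloc a b c (xi (pos al)) (xi (pos (Suc al))) q p g h))"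
  unfolding opeq_def using hatR_eq[OF assms] by simp



lemma sum_collapse_outer:
  assumes "c \<in> {1,2,3::nat}"
  shows "(\<Sum>h1\<in>{1,2,3::nat}. \<Sum>h3\<in>{1,2,3::nat}. A h1 h3 * (if h1 = c then B h3 else 0)) = (\<Sum>h3\<in>{1,2,3::nat}. A c h3 * (B h3::complex))"
proof -
  have "(\<Sum>h1\<in>{1,2,3::nat}. \<Sum>h3\<in>{1,2,3::nat}. A h1 h3 * (if h1 = c then B h3 else 0)) =
     (\<Sum>h1\<in>{1,2,3::nat}. if h1 = c then (\<Sum>h3\<in>{1,2,3::nat}. A h1 h3 * B h3) else 0)"
    unfolding mult_if0 sum_if_cond ..
  then show ?thesis using assms by (simp only: sum.delta' finite.intros) simp
qed

lemma sum_collapse_inner: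
  assumes "c \<in> {1,2,3::nat}"
  shows "(\<Sum>h1\<in>{1,2,3::nat}. \<Sum>h3\<in>{1,2,3::nat}. A h1 h3 * (if h3 = c then B h1 else 0)) = (\<Sum>h1\<in>{1,2,3::nat}. A h1 c * (B h1::complex))"
proof -
  have "\<And>h1. (\<Sum>h3\<in>{1,2,3::nat}. A h1 h3 * (if h3 = c then B h1 else 0)) = A h1 c * B h1"
  proof -
    fix h1
    have "(\<Sum>h3\<in>{1,2,3::nat}. A h1 h3 * (if h3 = c then B h1 else 0)) = (\<Sum>h3\<in>{1,2,3::nat}. if h3 = c then A h1 h3 * B h1 else 0)"
      unfolding mult_if0 ..
    then show "(\<Sum>h3\<in>{1,2,3::nat}. A h1 h3 * (if h3 = c then B h1 else 0)) = A h1 c * B h1"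
      using assms by (simp only: sum.delta' finite.intros) simp
  qed
  then show ?thesis by simp
qed

lemma set123: "{1,2,3::nat} - {2,3} = {1}" "{1,2,3::nat} - {1,2} = {3}" by auto

definition st3 :: "nat \<Rightarrow> nat \<Rightarrow> nat \<Rightarrow> state" where
  "st3 p q r = (\<lambda>n. if n = 1 then p else if n = 2 then q else if n = 3 then r else undefined)"

lemma st3_states: "p \<in> {1,2,3} \<Longrightarrow> q \<in> {1,2,3} \<Longrightarrow> r \<in> {1,2,3} \<Longrightarrow> st3 p q r \<in> states {1,2,3}"
  unfolding states_iff st3_def by auto

lemma LYBE:
  assumes Y: "YBE a b c" and v: "s1 \<in> {1,2,3}" "s2 \<in> {1,2,3}" "s3 \<in> {1,2,3}" "t1 \<in> {1,2,3}" "t2 \<in> {1,2,3}" "t3 \<in> {1,2,3}"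
  shows "(\<Sum>g1\<in>{1,2,3::nat}. \<Sum>g2\<in>{1,2,3::nat}. Rloc a b c x1 x2 s1 s2 g1 g2 *
            (\<Sum>h3\<in>{1,2,3::nat}. Rloc a b c x1 x3 g1 s3 t1 h3 * Rloc a b c x2 x3 g2 h3 t2 t3))
       = (\<Sum>g2\<in>{1,2,3::nat}. \<Sum>g3\<in>{1,2,3::nat}. Rloc a b c x2 x3 s2 s3 g2 g3 *
            (\<Sum>h1\<in>{1,2,3::nat}. Rloc a b c x1 x3 s1 g3 h1 t3 * Rloc a b c x1 x2 h1 g2 t1 t2))"
proof -
  let ?I = "{1,2,3::nat}"
  define s where "s = st3 s1 s2 s3"
  define t where "t = st3 t1 t2 t3"
  have s: "s \<in> states ?I" and t: "t \<in> states ?I" unfolding s_def t_def using v by (intro st3_states v)+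
  have sv: "s 1 = s1" "s 2 = s2" "s 3 = s3" "t 1 = t1" "t 2 = t2" "t 3 = t3" by (simp_all add: s_def t_def st3_def)
  have fin: "finite ?I" by simp
  have sv': "s (Suc 0) = s1" "t (Suc 0) = t1" using sv by simp_all
  have E: "opmult ?I (opmult ?I (Rop a b c ?I 1 2 x1 x2) (Rop a b c ?I 1 3 x1 x3)) (Rop a b c ?I 2 3 x2 x3) s t =
           opmult ?I (opmult ?I (Rop a b c ?I 2 3 x2 x3) (Rop a b c ?I 1 3 x1 x3)) (Rop a b c ?I 1 2 x1 x2) s t"
    using Y[unfolded YBE_def, rule_format, of x1 x2 x3, unfolded opeq_def, rule_format, OF s t] .
  have inner1: "opmult ?I (Rop a b c ?I 1 3 x1 x3) (Rop a b c ?I 2 3 x2 x3) u t =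
      (\<Sum>h3\<in>{1,2,3::nat}. Rloc a b c x1 x3 (u 1) (u 3) t1 h3 * Rloc a b c x2 x3 (u 2) h3 t2 t3)" if u: "u \<in> states ?I" for u
  proof -
    have "opmult ?I (Rop a b c ?I 1 3 x1 x3) (Rop a b c ?I 2 3 x2 x3) u t =
      (\<Sum>h1\<in>{1,2,3::nat}. \<Sum>h3\<in>{1,2,3::nat}. Rloc a b c x1 x3 (u 1) (u 3) h1 h3 * Rop a b c ?I 2 3 x2 x3 (u(1:=h1, 3:=h3)) t)"
      unfolding opmult_def Rop_def[of a b c ?I 1 3] by (rule sum_emb[OF fin _ _ _ u]) simp_all
    also have "\<dots> = (\<Sum>h1\<in>{1,2,3::nat}. \<Sum>h3\<in>{1,2,3::nat}. Rloc a b c x1 x3 (u 1) (u 3) h1 h3 * (if h1 = t1 then Rloc a b c x2 x3 (u 2) h3 t2 t3 else 0))"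
    proof (intro sum.cong refl)
      fix h1 h3 :: nat
      have c: "(\<forall>i\<in>{1::nat}. (u(1:=h1, 3:=h3)) i = t i) \<longleftrightarrow> h1 = t1" using sv by simp
      have d: "(u(1:=h1, 3:=h3)) 2 = u 2" "(u(1:=h1, 3:=h3)) 3 = h3" by simp_all
      show "Rloc a b c x1 x3 (u 1) (u 3) h1 h3 * Rop a b c ?I 2 3 x2 x3 (u(1:=h1, 3:=h3)) t =
        Rloc a b c x1 x3 (u 1) (u 3) h1 h3 * (if h1 = t1 then Rloc a b c x2 x3 (u 2) h3 t2 t3 else 0)"
        unfolding Rop_def emb_def set123 c d sv ..
    qed
    also have "\<dots> = (\<Sum>h3\<in>{1,2,3::nat}. Rloc a b c x1 x3 (u 1) (u 3) t1 h3 * Rloc a b c x2 x3 (u 2) h3 t2 t3)"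
      using sum_collapse_outer[OF v(4)] .
    finally show ?thesis .
  qed
  have inner2: "opmult ?I (Rop a b c ?I 1 3 x1 x3) (Rop a b c ?I 1 2 x1 x2) u t =
      (\<Sum>h1\<in>{1,2,3::nat}. Rloc a b c x1 x3 (u 1) (u 3) h1 t3 * Rloc a b c x1 x2 h1 (u 2) t1 t2)" if u: "u \<in> states ?I" for u
  proof -
    have "opmult ?I (Rop a b c ?I 1 3 x1 x3) (Rop a b c ?I 1 2 x1 x2) u t =
      (\<Sum>h1\<in>{1,2,3::nat}. \<Sum>h3\<in>{1,2,3::nat}. Rloc a b c x1 x3 (u 1) (u 3) h1 h3 * Rop a b c ?I 1 2 x1 x2 (u(1:=h1, 3:=h3)) t)"
      unfolding opmult_def Rop_def[of a b c ?I 1 3] by (rule sum_emb[OF fin _ _ _ u]) simp_all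
    also have "\<dots> = (\<Sum>h1\<in>{1,2,3::nat}. \<Sum>h3\<in>{1,2,3::nat}. Rloc a b c x1 x3 (u 1) (u 3) h1 h3 * (if h3 = t3 then Rloc a b c x1 x2 h1 (u 2) t1 t2 else 0))"
    proof (intro sum.cong refl)
      fix h1 h3 :: nat
      have c: "(\<forall>i\<in>{3::nat}. (u(1:=h1, 3:=h3)) i = t i) \<longleftrightarrow> h3 = t3" using sv by simp
      have d: "(u(1:=h1, 3:=h3)) 2 = u 2" "(u(1:=h1, 3:=h3)) 1 = h1" by simp_all
      show "Rloc a b c x1 x3 (u 1) (u 3) h1 h3 * Rop a b c ?I 1 2 x1 x2 (u(1:=h1, 3:=h3)) t =
        Rloc a b c x1 x3 (u 1) (u 3) h1 h3 * (if h3 = t3 then Rloc a b c x1 x2 h1 (u 2) t1 t2 else 0)"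
        unfolding Rop_def emb_def set123 c d sv ..
    qed
    also have "\<dots> = (\<Sum>h1\<in>{1,2,3::nat}. Rloc a b c x1 x3 (u 1) (u 3) h1 t3 * Rloc a b c x1 x2 h1 (u 2) t1 t2)"
      using sum_collapse_inner[OF v(6)] .
    finally show ?thesis .
  qed
  have "opmult ?I (opmult ?I (Rop a b c ?I 1 2 x1 x2) (Rop a b c ?I 1 3 x1 x3)) (Rop a b c ?I 2 3 x2 x3) s t
     = (\<Sum>g1\<in>{1,2,3::nat}. \<Sum>g2\<in>{1,2,3::nat}. Rloc a b c x1 x2 s1 s2 g1 g2 *
          opmult ?I (Rop a b c ?I 1 3 x1 x3) (Rop a b c ?I 2 3 x2 x3) (s(1:=g1, 2:=g2)) t)"
    unfolding opmult_assoc Rop_def[of a b c ?I 1 2] unfolding opmult_def[of ?I "emb ?I 1 2 (Rloc a b c x1 x2)"]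
    by (subst sum_emb[OF fin _ _ _ s]) (simp_all add: sv sv')
  also have "\<dots> = (\<Sum>g1\<in>{1,2,3::nat}. \<Sum>g2\<in>{1,2,3::nat}. Rloc a b c x1 x2 s1 s2 g1 g2 *
            (\<Sum>h3\<in>{1,2,3::nat}. Rloc a b c x1 x3 g1 s3 t1 h3 * Rloc a b c x2 x3 g2 h3 t2 t3))"
  proof (intro sum.cong refl)
    fix g1 g2 :: nat assume g: "g1 \<in> {1,2,3}" "g2 \<in> {1,2,3}"
    have "s(1:=g1, 2:=g2) \<in> states ?I" using s g by (auto simp: states_iff)
    from inner1[OF this] show "Rloc a b c x1 x2 s1 s2 g1 g2 * opmult ?I (Rop a b c ?I 1 3 x1 x3) (Rop a b c ?I 2 3 x2 x3) (s(1:=g1, 2:=g2)) t =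
       Rloc a b c x1 x2 s1 s2 g1 g2 * (\<Sum>h3\<in>{1,2,3::nat}. Rloc a b c x1 x3 g1 s3 t1 h3 * Rloc a b c x2 x3 g2 h3 t2 t3)"
      by (simp add: sv sv')
  qed
  finally have L: "opmult ?I (opmult ?I (Rop a b c ?I 1 2 x1 x2) (Rop a b c ?I 1 3 x1 x3)) (Rop a b c ?I 2 3 x2 x3) s t = \<dots>" .
  have "opmult ?I (opmult ?I (Rop a b c ?I 2 3 x2 x3) (Rop a b c ?I 1 3 x1 x3)) (Rop a b c ?I 1 2 x1 x2) s t
     = (\<Sum>g2\<in>{1,2,3::nat}. \<Sum>g3\<in>{1,2,3::nat}. Rloc a b c x2 x3 s2 s3 g2 g3 *
          opmult ?I (Rop a b c ?I 1 3 x1 x3) (Rop a b c ?I 1 2 x1 x2) (s(2:=g2, 3:=g3)) t)"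
    unfolding opmult_assoc Rop_def[of a b c ?I 2 3] unfolding opmult_def[of ?I "emb ?I 2 3 (Rloc a b c x2 x3)"]
    by (subst sum_emb[OF fin _ _ _ s]) (simp_all add: sv sv')
  also have "\<dots> = (\<Sum>g2\<in>{1,2,3::nat}. \<Sum>g3\<in>{1,2,3::nat}. Rloc a b c x2 x3 s2 s3 g2 g3 *
            (\<Sum>h1\<in>{1,2,3::nat}. Rloc a b c x1 x3 s1 g3 h1 t3 * Rloc a b c x1 x2 h1 g2 t1 t2))"
  proof (intro sum.cong refl)
    fix g2 g3 :: nat assume g: "g2 \<in> {1,2,3}" "g3 \<in> {1,2,3}"
    have "s(2:=g2, 3:=g3) \<in> states ?I" using s g by (auto simp: states_iff)
    from inner2[OF this] show "Rloc a b c x2 x3 s2 s3 g2 g3 * opmult ?I (Rop a b c ?I 1 3 x1 x3) (Rop a b c ?I 1 2 x1 x2) (s(2:=g2, 3:=g3)) t =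
       Rloc a b c x2 x3 s2 s3 g2 g3 * (\<Sum>h1\<in>{1,2,3::nat}. Rloc a b c x1 x3 s1 g3 h1 t3 * Rloc a b c x1 x2 h1 g2 t1 t2)"
      by (simp add: sv sv')
  qed
  finally have R: "opmult ?I (opmult ?I (Rop a b c ?I 2 3 x2 x3) (Rop a b c ?I 1 3 x1 x3)) (Rop a b c ?I 1 2 x1 x2) s t = \<dots>" .
  show ?thesis using E unfolding L R .
qed

lemma rearr:
  "(\<Sum>g\<in>S. \<Sum>h\<in>S. (\<Sum>m\<in>S. A m h * B m g) * C h g) = (\<Sum>m\<in>S. \<Sum>h\<in>S. A m h * (\<Sum>g\<in>S. B m g * (C h g::complex)))"
proof -
  have "(\<Sum>g\<in>S. \<Sum>h\<in>S. (\<Sum>m\<in>S. A m h * B m g) * C h g) = (\<Sum>g\<in>S. \<Sum>h\<in>S. \<Sum>m\<in>S. A m h * B m g * C h g)"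
    by (simp add: sum_distrib_right)
  also have "\<dots> = (\<Sum>g\<in>S. \<Sum>m\<in>S. \<Sum>h\<in>S. A m h * B m g * C h g)"
    by (rule sum.cong[OF refl], rule sum.swap)
  also have "\<dots> = (\<Sum>m\<in>S. \<Sum>g\<in>S. \<Sum>h\<in>S. A m h * B m g * C h g)"
    by (rule sum.swap)
  also have "\<dots> = (\<Sum>m\<in>S. \<Sum>h\<in>S. \<Sum>g\<in>S. A m h * B m g * C h g)"
    by (rule sum.cong[OF refl], rule sum.swap)
  also have "\<dots> = (\<Sum>m\<in>S. \<Sum>h\<in>S. A m h * (\<Sum>g\<in>S. B m g * C h g))"
    by (simp add: sum_distrib_left mult.assoc)
  finally show ?thesis .
qed

lemma local_ybe:
  assumes Y: "YBE a b c" and kl: "k \<in> {1,2,3}" and v: "r \<in> {1,2,3}" "p \<in> {1,2,3}" and l: "l \<in> {1,2,3}" and v2: "g \<in> {1,2,3}" "h \<in> {1,2,3}"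
  shows "(\<Sum>g'\<in>{1,2,3::nat}. \<Sum>h'\<in>{1,2,3::nat}. Rloc a b c x y r p g' h' * (\<Sum>m\<in>{1,2,3::nat}. Rloc a b c mu y k h' m h * Rloc a b c mu x m g' l g))
       = (\<Sum>g'\<in>{1,2,3::nat}. \<Sum>h'\<in>{1,2,3::nat}. (\<Sum>m\<in>{1,2,3::nat}. Rloc a b c mu x k r m h' * Rloc a b c mu y m p l g') * Rloc a b c x y h' g' g h)"
proof -
  have "(\<Sum>g'\<in>{1,2,3::nat}. \<Sum>h'\<in>{1,2,3::nat}. Rloc a b c x y r p g' h' * (\<Sum>m\<in>{1,2,3::nat}. Rloc a b c mu y k h' m h * Rloc a b c mu x m g' l g))
     = (\<Sum>g1\<in>{1,2,3::nat}. \<Sum>g2\<in>{1,2,3::nat}. Rloc a b c mu x k r g1 g2 *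
            (\<Sum>h3\<in>{1,2,3::nat}. Rloc a b c mu y g1 p l h3 * Rloc a b c x y g2 h3 g h))"
    using LYBE[OF Y kl v(1) v(2) l v2, of mu x y] by simp
  also have "\<dots> = (\<Sum>g'\<in>{1,2,3::nat}. \<Sum>h'\<in>{1,2,3::nat}. (\<Sum>m\<in>{1,2,3::nat}. Rloc a b c mu x k r m h' * Rloc a b c mu y m p l g') * Rloc a b c x y h' g' g h)"
      using rearr[where A="\<lambda>m h'. Rloc a b c mu x k r m h'" and B="\<lambda>m g'. Rloc a b c mu y m p l g'" and C="\<lambda>h' g'. Rloc a b c x y h' g' g h" and S="{1,2,3::nat}"]
      by simp
  finally show ?thesis .
qed

lemma YBE_core:
  assumes Y: "YBE a b c" and I: "finite I" and al: "al \<in> I" "Suc al \<in> I" and kl: "k \<in> {1,2,3}" "l \<in> {1,2,3}"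
  shows "opeq I (opmult I (hatR a b c I xi al q) (G a b c mu I [(Suc al, xi (q (Suc al))), (al, xi (q al))] k l))
        (opmult I (G a b c mu I [(Suc al, xi (q al)), (al, xi (q (Suc al)))] k l) (hatR a b c I xi al q))"
proof -
  define x where "x = xi (q al)"
  define y where "y = xi (q (Suc al))"
  let ?MH = "\<lambda>p q g h. Rloc a b c x y q p g h"
  let ?FT = "\<lambda>p q g h. \<Sum>m\<in>{1,2,3::nat}. Rloc a b c mu y k q m h * Rloc a b c mu x m p l g"
  let ?FT' = "\<lambda>p q g h. \<Sum>m\<in>{1,2,3::nat}. Rloc a b c mu x k q m h * Rloc a b c mu y m p l g"
  have ne: "al \<noteq> Suc al" by simp
  have "opeq I (opmult I (hatR a b c I xi al q) (G a b c mu I [(Suc al, y), (al, x)] k l))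
      (opmult I (emb I al (Suc al) ?MH) (emb I al (Suc al) ?FT))"
    by (intro opeq_mult hatR_emb[OF I al, of a b c xi q, unfolded x_def[symmetric] y_def[symmetric]] G2_emb[OF I al ne kl(2)])
  also have "opeq I \<dots> (emb I al (Suc al) (\<lambda>p q g h. \<Sum>g'\<in>{1,2,3::nat}. \<Sum>h'\<in>{1,2,3::nat}. ?MH p q g' h' * ?FT g' h' g h))"
    by (rule emb_emb[OF I al ne])
  also have "opeq I \<dots> (emb I al (Suc al) (\<lambda>p q g h. \<Sum>g'\<in>{1,2,3::nat}. \<Sum>h'\<in>{1,2,3::nat}. ?FT' p q g' h' * ?MH g' h' g h))"
  proof (rule emb_cong[OF _ al])
    fix p r g h :: nat assume v: "p \<in> {1,2,3}" "r \<in> {1,2,3}" "g \<in> {1,2,3}" "h \<in> {1,2,3}"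
    show "(\<Sum>g'\<in>{1,2,3::nat}. \<Sum>h'\<in>{1,2,3::nat}. ?MH p r g' h' * ?FT g' h' g h)
       = (\<Sum>g'\<in>{1,2,3::nat}. \<Sum>h'\<in>{1,2,3::nat}. ?FT' p r g' h' * ?MH g' h' g h)"
      using local_ybe[OF Y kl(1) v(2) v(1) kl(2) v(3) v(4), of x y mu] by simp
  qed
  also have "opeq I \<dots> (opmult I (emb I al (Suc al) ?FT') (emb I al (Suc al) ?MH))"
    by (rule opeq_sym, rule emb_emb[OF I al ne])
  also have "opeq I \<dots> (opmult I (G a b c mu I [(Suc al, x), (al, y)] k l) (hatR a b c I xi al q))"
    by (intro opeq_mult opeq_sym[OF hatR_emb[OF I al, of a b c xi q, unfolded x_def[symmetric] y_def[symmetric]]] opeq_sym[OF G2_emb[OF I al ne kl(2)]])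
  finally show ?thesis unfolding x_def y_def .
qed

lemma G_commute:
  assumes I: "finite I"
    and H: "\<And>j x k m. (j,x) \<in> set list \<Longrightarrow> opeq I (opmult I A (Rsite a b c mu I j x k m)) (opmult I (Rsite a b c mu I j x k m) A)"
  shows "opeq I (opmult I A (G a b c mu I list k l)) (opmult I (G a b c mu I list k l) A)"
proof -
  have "map (\<lambda>(j,x). (id j, x)) list = list" by (induction list) auto
  then show ?thesis using G_intertwine[OF I, of list A a b c mu id k l] H by simp
qed

definition chainL where
  "chainL xi L q = map (\<lambda>i. (i, xi (q i))) (rev [1..<Suc L])"

lemma split_rev_upt:
  assumes "1 \<le> al" "al < L"
  shows "rev [1..<Suc L] = rev [Suc (Suc al)..<Suc L] @ [Suc al, al] @ rev [1..<al]"
proof -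
  have "[1..<Suc L] = [1..<al] @ [al..<Suc L]" using assms upt_add_eq_append[of 1 al "Suc L - al"] by simp
  also have "[al..<Suc L] = al # Suc al # [Suc (Suc al)..<Suc L]" using assms by (simp add: upt_conv_Cons)
  finally show ?thesis by simp
qed

lemma hatR_chain:
  assumes Y: "YBE a b c" and al: "1 \<le> al" "al < L" and kl: "k \<in> {1,2,3}" "l \<in> {1,2,3}"
  shows "opeq {1..L} (opmult {1..L} (hatR a b c {1..L} xi al q) (G a b c mu {1..L} (chainL xi L q) k l))
     (opmult {1..L} (G a b c mu {1..L} (chainL xi L (q \<circ> Transposition.transpose al (Suc al))) k l) (hatR a b c {1..L} xi al q))"
proof -
  let ?I = "{1..L}"
  let ?T = "Transposition.transpose al (Suc al)"
  have I: "finite ?I" by simp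
  have alI: "al \<in> ?I" "Suc al \<in> ?I" using al by auto
  define pre where "pre = map (\<lambda>i. (i, xi (q i))) (rev [Suc (Suc al)..<Suc L])"
  define post where "post = map (\<lambda>i. (i, xi (q i))) (rev [1..<al])"
  define mid where "mid = [(Suc al, xi (q (Suc al))), (al, xi (q al))]"
  define mid' where "mid' = [(Suc al, xi (q al)), (al, xi (q (Suc al)))]"
  have c1: "chainL xi L q = pre @ mid @ post"
    unfolding chainL_def pre_def mid_def post_def split_rev_upt[OF al] by simp
  have pre': "map (\<lambda>i. (i, xi ((q \<circ> ?T) i))) (rev [Suc (Suc al)..<Suc L]) = pre"
    unfolding pre_def by (auto simp: transpose_def)
  have post': "map (\<lambda>i. (i, xi ((q \<circ> ?T) i))) (rev [1..<al]) = post"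
    unfolding post_def by (auto simp: transpose_def)
  have c2: "chainL xi L (q \<circ> ?T) = pre @ mid' @ post"
    unfolding chainL_def split_rev_upt[OF al] map_append pre' post' mid'_def by (simp add: transpose_def)
  let ?H = "hatR a b c ?I xi al q"
  let ?G = "G a b c mu ?I"
  have Hpre: "opeq ?I (opmult ?I ?H (?G pre k' m)) (opmult ?I (?G pre k' m) ?H)" for k' m
    by (rule G_commute[OF I]) (rule hatR_Rsite_comm[OF I alI], auto simp: pre_def)
  have Hpost: "opeq ?I (opmult ?I ?H (?G post k' m)) (opmult ?I (?G post k' m) ?H)" for k' m
    by (rule G_commute[OF I]) (rule hatR_Rsite_comm[OF I alI], use al in \<open>auto simp: post_def\<close>)
  have Hmid: "opeq ?I (opmult ?I ?H (?G mid m n)) (opmult ?I (?G mid' m n) ?H)" if "m \<in> {1,2,3}" "n \<in> {1,2,3}" for m n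
    unfolding mid_def mid'_def by (rule YBE_core[OF Y I alI that])
  have step: "opeq ?I (opmult ?I ?H (opmult ?I (?G pre k m) (opmult ?I (?G mid m n) (?G post n l))))
        (opmult ?I (?G pre k m) (opmult ?I (?G mid' m n) (opmult ?I (?G post n l) ?H)))"
    if mn: "m \<in> {1,2,3}" "n \<in> {1,2,3}" for m n
  proof -
    have a1: "opeq ?I (opmult ?I ?H (opmult ?I (?G mid m n) (?G post n l))) (opmult ?I (?G mid' m n) (opmult ?I (?G post n l) ?H))"
    proof -
      have "opmult ?I ?H (opmult ?I (?G mid m n) (?G post n l)) = opmult ?I (opmult ?I ?H (?G mid m n)) (?G post n l)"
        by (simp add: opmult_assoc)
      also have "opeq ?I \<dots> (opmult ?I (opmult ?I (?G mid' m n) ?H) (?G post n l))"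
        by (intro opeq_mult Hmid[OF mn] opeq_refl)
      also have "\<dots> = opmult ?I (?G mid' m n) (opmult ?I ?H (?G post n l))" by (simp add: opmult_assoc)
      also have "opeq ?I \<dots> (opmult ?I (?G mid' m n) (opmult ?I (?G post n l) ?H))"
        by (intro opeq_mult Hpost opeq_refl)
      finally show ?thesis .
    qed
    have "opmult ?I ?H (opmult ?I (?G pre k m) (opmult ?I (?G mid m n) (?G post n l)))
       = opmult ?I (opmult ?I ?H (?G pre k m)) (opmult ?I (?G mid m n) (?G post n l))" by (simp add: opmult_assoc)
    also have "opeq ?I \<dots> (opmult ?I (opmult ?I (?G pre k m) ?H) (opmult ?I (?G mid m n) (?G post n l)))"
      by (intro opeq_mult Hpre opeq_refl)
    also have "\<dots> = opmult ?I (?G pre k m) (opmult ?I ?H (opmult ?I (?G mid m n) (?G post n l)))" by (simp add: opmult_assoc)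
    also have "opeq ?I \<dots> (opmult ?I (?G pre k m) (opmult ?I (?G mid' m n) (opmult ?I (?G post n l) ?H)))"
      by (intro opeq_mult a1 opeq_refl)
    finally show ?thesis .
  qed
  have "opeq ?I (opmult ?I ?H (?G (chainL xi L q) k l))
      (opmult ?I ?H (opsum {1,2,3} (\<lambda>m. opmult ?I (?G pre k m) (opsum {1,2,3} (\<lambda>n. opmult ?I (?G mid m n) (?G post n l))))))"
    unfolding c1
    by (intro opeq_mult opeq_refl opeq_trans[OF G_append[OF I kl(1)]] opeq_sum G_append[OF I]) auto
  also have "\<dots> = opsum {1,2,3} (\<lambda>m. opsum {1,2,3} (\<lambda>n. opmult ?I ?H (opmult ?I (?G pre k m) (opmult ?I (?G mid m n) (?G post n l)))))"
    by (simp add: opmult_sum_right)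
  also have "opeq ?I \<dots> (opsum {1,2,3} (\<lambda>m. opsum {1,2,3} (\<lambda>n. opmult ?I (?G pre k m) (opmult ?I (?G mid' m n) (opmult ?I (?G post n l) ?H)))))"
    by (intro opeq_sum step)
  also have "\<dots> = opmult ?I (opsum {1,2,3} (\<lambda>m. opmult ?I (?G pre k m) (opsum {1,2,3} (\<lambda>n. opmult ?I (?G mid' m n) (?G post n l))))) ?H"
    by (simp add: opmult_sum_left opmult_sum_right opmult_assoc)
  also have "opeq ?I \<dots> (opmult ?I (?G (chainL xi L (q \<circ> ?T)) k l) ?H)"
    unfolding c2
    by (intro opeq_mult opeq_refl opeq_sym[OF opeq_trans[OF G_append[OF I kl(1)]]] opeq_sum G_append[OF I]) auto
  finally show ?thesis .
qed

definition fin :: "nat list \<Rightarrow> (nat \<Rightarrow> nat) \<Rightarrow> nat \<Rightarrow> nat" where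
  "fin w q = fold (\<lambda>al q. q \<circ> Transposition.transpose al (Suc al)) w q"

lemma fin_Cons: "fin (al#w) q = fin w (q \<circ> Transposition.transpose al (Suc al))"
  by (simp add: fin_def)

lemma hatprod_chain:
  assumes Y: "YBE a b c" and w: "set w \<subseteq> {1..<L}" and kl: "k \<in> {1,2,3}" "l \<in> {1,2,3}"
  shows "opeq {1..L} (opmult {1..L} (hatprod a b c {1..L} xi w q) (G a b c mu {1..L} (chainL xi L q) k l))
     (opmult {1..L} (G a b c mu {1..L} (chainL xi L (fin w q)) k l) (hatprod a b c {1..L} xi w q))"
  using w
proof (induction w arbitrary: q)
  case Nil
  have I: "finite {1..L}" by simp
  show ?case using opid_left[OF I] opid_right[OF I] by (simp add: fin_def) (meson opeq_sym opeq_trans)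
next
  case (Cons al w)
  let ?I = "{1..L}"
  let ?T = "Transposition.transpose al (Suc al)"
  let ?P = "hatprod a b c ?I xi w (q \<circ> ?T)"
  let ?H = "hatR a b c ?I xi al q"
  have al: "1 \<le> al" "al < L" using Cons.prems by auto
  have "opmult ?I (hatprod a b c ?I xi (al#w) q) (G a b c mu ?I (chainL xi L q) k l)
     = opmult ?I ?P (opmult ?I ?H (G a b c mu ?I (chainL xi L q) k l))"
    by (simp add: opmult_assoc)
  also have "opeq ?I \<dots> (opmult ?I ?P (opmult ?I (G a b c mu ?I (chainL xi L (q \<circ> ?T)) k l) ?H))"
    by (intro opeq_mult opeq_refl hatR_chain[OF Y al kl])
  also have "\<dots> = opmult ?I (opmult ?I ?P (G a b c mu ?I (chainL xi L (q \<circ> ?T)) k l)) ?H"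
    by (simp add: opmult_assoc)
  also have "opeq ?I \<dots> (opmult ?I (opmult ?I (G a b c mu ?I (chainL xi L (fin w (q \<circ> ?T))) k l) ?P) ?H)"
    using Cons by (intro opeq_mult opeq_refl Cons.IH) auto
  also have "\<dots> = opmult ?I (G a b c mu ?I (chainL xi L (fin (al#w) q)) k l) (hatprod a b c ?I xi (al#w) q)"
    by (simp add: opmult_assoc fin_Cons)
  finally show ?case .
qed

lemma fold_word_perm: "fold (\<lambda>al f. Transposition.transpose al (Suc al) \<circ> f) w (g::nat\<Rightarrow>nat) = word_perm w \<circ> g"
proof (induction w arbitrary: g)
  case Nil then show ?case by (simp add: word_perm_def)
next
  case (Cons a w)
  let ?f = "\<lambda>al f. Transposition.transpose al (Suc al) \<circ> f"
  have "fold ?f (a#w) g = fold ?f w (Transposition.transpose a (Suc a) \<circ> g)" by (simp only: fold_Cons comp_apply)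
  also have "\<dots> = word_perm w \<circ> (Transposition.transpose a (Suc a) \<circ> g)" by (rule Cons.IH)
  finally have e1: "fold ?f (a#w) g = word_perm w \<circ> (Transposition.transpose a (Suc a) \<circ> g)" .
  have "word_perm (a#w) = fold ?f w (Transposition.transpose a (Suc a) \<circ> id)" unfolding word_perm_def by (simp only: fold_Cons comp_apply)
  also have "\<dots> = word_perm w \<circ> (Transposition.transpose a (Suc a) \<circ> id)" by (rule Cons.IH)
  finally have e2: "word_perm (a#w) = word_perm w \<circ> (Transposition.transpose a (Suc a) \<circ> id)" .
  show ?case unfolding e1 e2 by (simp add: comp_assoc)
qed

lemma word_perm_Cons: "word_perm (a#w) = word_perm w \<circ> Transposition.transpose a (Suc a)"
  using fold_word_perm[of w "Transposition.transpose a (Suc a)"] by (simp add: word_perm_def)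

lemma fin_rev: "fin (rev w) q = q \<circ> word_perm w"
proof (induction w arbitrary: q)
  case Nil then show ?case by (simp add: fin_def word_perm_def)
next
  case (Cons a w)
  then show ?case by (simp add: fin_def word_perm_Cons comp_assoc)
qed

lemma pprod_G:
  assumes w: "set w \<subseteq> {1..<L}" and sites: "\<forall>(j,x)\<in>set list. j \<in> {1..L}"
  shows "opeq {1..L} (opmult {1..L} (pprod {1..L} w) (G a b c mu {1..L} list k l))
     (opmult {1..L} (G a b c mu {1..L} (map (\<lambda>(j,x). (word_perm w j, x)) list) k l) (pprod {1..L} w))"
  using w sites
proof (induction w arbitrary: list)
  case Nil
  have I: "finite {1..L}" by simp
  have "map (\<lambda>(j,x). (word_perm [] j, x)) list = list" by (induction list) (auto simp: word_perm_def)
  then show ?case using opid_left[OF I] opid_right[OF I] by simp (meson opeq_sym opeq_trans)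
next
  case (Cons al w)
  let ?I = "{1..L}"
  let ?T = "Transposition.transpose al (Suc al)"
  let ?list' = "map (\<lambda>(j,x). (?T j, x)) list"
  have I: "finite ?I" by simp
  have al: "al \<in> ?I" "Suc al \<in> ?I" using Cons.prems by auto
  have "opmult ?I (pprod ?I (al#w)) (G a b c mu ?I list k l) = opmult ?I (pprod ?I w) (opmult ?I (Pop al (Suc al)) (G a b c mu ?I list k l))"
    by (simp add: opmult_assoc)
  also have "opeq ?I \<dots> (opmult ?I (pprod ?I w) (opmult ?I (G a b c mu ?I ?list' k l) (Pop al (Suc al))))"
    by (intro opeq_mult opeq_refl G_intertwine[OF I] Pop_Rsite[OF I al]) (use Cons.prems in auto)
  also have "\<dots> = opmult ?I (opmult ?I (pprod ?I w) (G a b c mu ?I ?list' k l)) (Pop al (Suc al))"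
    by (simp add: opmult_assoc)
  also have "opeq ?I \<dots> (opmult ?I (opmult ?I (G a b c mu ?I (map (\<lambda>(j,x). (word_perm w j, x)) ?list') k l) (pprod ?I w)) (Pop al (Suc al)))"
  proof -
    have "set w \<subseteq> {1..<L}" using Cons.prems by auto
    moreover have "\<forall>(j,x)\<in>set ?list'. j \<in> ?I" using Cons.prems al by (auto simp: transpose_def)
    ultimately have "opeq ?I (opmult ?I (pprod ?I w) (G a b c mu ?I ?list' k l)) (opmult ?I (G a b c mu ?I (map (\<lambda>(j,x). (word_perm w j, x)) ?list') k l) (pprod ?I w))"
      by (rule Cons.IH)
    then show ?thesis by (rule opeq_mult[OF _ opeq_refl])
  qed
  also have "map (\<lambda>(j,x). (word_perm w j, x)) ?list' = map (\<lambda>(j,x). (word_perm (al#w) j, x)) list"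
    by (auto simp: word_perm_Cons)
  finally show ?case by (simp add: opmult_assoc)
qed

lemma Rword_D:
  assumes Y: "YBE a b c" and w: "set w \<subseteq> {1..<L}" and kl: "k \<in> {1,2,3}" "l \<in> {1,2,3}"
  shows "opeq {1..L} (opmult {1..L} (Rword a b c {1..L} xi w) (G a b c mu {1..L} (chainL xi L id) k l))
     (opmult {1..L} (G a b c mu {1..L} (map (\<lambda>i. (word_perm w i, xi (word_perm w i))) (rev [1..<Suc L])) k l) (Rword a b c {1..L} xi w))"
proof -
  let ?I = "{1..L}"
  let ?s = "word_perm w"
  have "opmult ?I (Rword a b c ?I xi w) (G a b c mu ?I (chainL xi L id) k l)
     = opmult ?I (pprod ?I w) (opmult ?I (hatprod a b c ?I xi (rev w) id) (G a b c mu ?I (chainL xi L id) k l))"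
    by (simp add: Rword_def opmult_assoc)
  also have "opeq ?I \<dots> (opmult ?I (pprod ?I w) (opmult ?I (G a b c mu ?I (chainL xi L ?s) k l) (hatprod a b c ?I xi (rev w) id)))"
    using hatprod_chain[OF Y _ kl, where w="rev w" and xi=xi and q=id] w by (intro opeq_mult[OF opeq_refl]) (auto simp: fin_rev)
  also have "\<dots> = opmult ?I (opmult ?I (pprod ?I w) (G a b c mu ?I (chainL xi L ?s) k l)) (hatprod a b c ?I xi (rev w) id)"
    by (simp add: opmult_assoc)
  also have "opeq ?I \<dots> (opmult ?I (opmult ?I (G a b c mu ?I (map (\<lambda>(j,x). (?s j, x)) (chainL xi L ?s)) k l) (pprod ?I w)) (hatprod a b c ?I xi (rev w) id))"
    by (intro opeq_mult[OF _ opeq_refl] pprod_G w) (auto simp: chainL_def)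
  also have "map (\<lambda>(j,x). (?s j, x)) (chainL xi L ?s) = map (\<lambda>i. (?s i, xi (?s i))) (rev [1..<Suc L])"
    by (simp add: chainL_def)
  finally show ?thesis by (simp only: Rword_def opmult_assoc)
qed

lemma Rloc_nz: "Rloc a b c x y k v m h \<noteq> 0 \<Longrightarrow> (m = k \<and> h = v) \<or> (m = v \<and> h = k)"
  unfolding Rloc_def by (auto split: if_splits)

lemma sum2_single:
  assumes "m0 \<in> {1,2,3::nat}" "h0 \<in> {1,2,3::nat}"
    and "\<And>m h. m \<in> {1,2,3} \<Longrightarrow> h \<in> {1,2,3} \<Longrightarrow> \<not> (m = m0 \<and> h = h0) \<Longrightarrow> f m h = (0::complex)"
  shows "(\<Sum>m\<in>{1,2,3::nat}. \<Sum>h\<in>{1,2,3::nat}. f m h) = f m0 h0"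
proof -
  have "(\<Sum>m\<in>{1,2,3::nat}. \<Sum>h\<in>{1,2,3::nat}. f m h) = (\<Sum>m\<in>{1,2,3::nat}. if m = m0 then (\<Sum>h\<in>{1,2,3::nat}. if h = h0 then f m h else 0) else 0)"
    using assms(3) by (intro sum.cong refl) auto
  then show ?thesis using assms(1,2) by (simp only: sum.delta' finite.intros) simp
qed

lemma G_vanish:
  assumes I: "finite I"
  shows "distinct (map fst ls) \<Longrightarrow> set (map fst ls) \<subseteq> I \<Longrightarrow> sorted_wrt (\<lambda>(j,_) (j',_). s j' \<le> s j) ls \<Longrightarrow>
    (\<forall>(j,x)\<in>set ls. s j \<le> k) \<Longrightarrow> k < l \<Longrightarrow> s \<in> states I \<Longrightarrow> G a b c mu I ls k l s t = 0"
proof (induction ls arbitrary: k s)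
  case Nil then show ?case by simp
next
  case (Cons jx rest)
  obtain j x where jx: "jx = (j,x)" by fastforce
  have j: "j \<in> I" using Cons.prems jx by auto
  have "G a b c mu I (jx#rest) k l s t = (\<Sum>m\<in>{1,2,3::nat}. \<Sum>h\<in>{1,2,3::nat}. Rloc a b c mu x k (s j) m h * G a b c mu I rest m l (s(j:=h)) t)"
    unfolding jx G.simps opsum_def opmult_def using sum_site[OF I j Cons.prems(6)] by simp
  also have "\<dots> = 0"
  proof (intro sum.neutral ballI)
    fix m h :: nat assume mh: "m \<in> {1,2,3}" "h \<in> {1,2,3}"
    show "Rloc a b c mu x k (s j) m h * G a b c mu I rest m l (s(j:=h)) t = 0"
    proof (cases "Rloc a b c mu x k (s j) m h = 0")
      case False
      then have mh': "(m = k \<and> h = s j) \<or> (m = s j \<and> h = k)" by (rule Rloc_nz)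
      have jr: "j \<notin> fst ` set rest" using Cons.prems(1) jx by simp
      have upd: "(s(j:=h)) j' = s j'" if "(j',x') \<in> set rest" for j' x'
        using jr that by (auto simp: image_iff)
      have "G a b c mu I rest m l (s(j:=h)) t = 0"
      proof (rule Cons.IH)
        show "distinct (map fst rest)" using Cons.prems(1) by simp
        show "set (map fst rest) \<subseteq> I" using Cons.prems(2) by simp
        show "sorted_wrt (\<lambda>(i,_) (i',_). (s(j:=h)) i' \<le> (s(j:=h)) i) rest"
        proof -
          have "sorted_wrt (\<lambda>(j,_) (j',_). s j' \<le> s j) rest" using Cons.prems(3) by simp
          then show ?thesis
            by (rule sorted_wrt_mono_rel[rotated]) (use upd in auto)
        qed
        show "\<forall>(j',x')\<in>set rest. (s(j:=h)) j' \<le> m"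
        proof (intro ballI, clarify)
          fix j' x' assume jx': "(j',x') \<in> set rest"
          have "s j' \<le> s j" using Cons.prems(3) jx jx' by auto
          moreover have "s j' \<le> k" using Cons.prems(4) jx' by auto
          ultimately show "(s(j:=h)) j' \<le> m" using upd[OF jx'] mh' by auto
        qed
        show "m < l" using mh' Cons.prems(4,5) jx by auto
        show "s(j:=h) \<in> states I" using Cons.prems(6) j mh by (simp add: states_upd)
      qed
      then show ?thesis by simp
    qed simp
  qed
  finally show ?case .
qed

lemma G_diag:
  assumes I: "finite I"
  shows "distinct (map fst ls) \<Longrightarrow> set (map fst ls) \<subseteq> I \<Longrightarrow> sorted_wrt (\<lambda>(j,_) (j',_). s j' \<le> s j) ls \<Longrightarrow>
    s \<in> states I \<Longrightarrow> t \<in> states I \<Longrightarrow>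
    G a b c mu I ls 3 3 s t = (if s = t then prod_list (map (\<lambda>(j,x). Rloc a b c mu x 3 (s j) 3 (s j)) ls) else 0)"
proof (induction ls)
  case Nil then show ?case by (simp add: opid_def)
next
  case (Cons jx rest)
  obtain j x where jx: "jx = (j,x)" by fastforce
  have j: "j \<in> I" using Cons.prems jx by auto
  have sj: "s j \<in> {1,2,3}" using states_val[OF Cons.prems(4) j] .
  have jr: "j \<notin> fst ` set rest" using Cons.prems(1) jx by simp
  have upd: "(s(j:=h)) j' = s j'" if "(j',x') \<in> set rest" for j' x' h
    using jr that by (auto simp: image_iff)
  have "G a b c mu I (jx#rest) 3 3 s t = (\<Sum>m\<in>{1,2,3::nat}. \<Sum>h\<in>{1,2,3::nat}. Rloc a b c mu x 3 (s j) m h * G a b c mu I rest m 3 (s(j:=h)) t)"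
    unfolding jx G.simps opsum_def opmult_def using sum_site[OF I j Cons.prems(4)] by simp
  also have "\<dots> = Rloc a b c mu x 3 (s j) 3 (s j) * G a b c mu I rest 3 3 (s(j:=s j)) t"
  proof (rule sum2_single[OF _ sj])
    fix m h :: nat assume mh: "m \<in> {1,2,3}" "h \<in> {1,2,3}" "\<not> (m = 3 \<and> h = s j)"
    show "Rloc a b c mu x 3 (s j) m h * G a b c mu I rest m 3 (s(j:=h)) t = 0"
    proof (cases "Rloc a b c mu x 3 (s j) m h = 0")
      case False
      then have mh': "m = s j \<and> h = 3 \<and> s j < 3" using Rloc_nz[OF False] mh sj by auto
      have "G a b c mu I rest m 3 (s(j:=h)) t = 0"
      proof (rule G_vanish[OF I])
        show "distinct (map fst rest)" using Cons.prems(1) by simp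
        show "set (map fst rest) \<subseteq> I" using Cons.prems(2) by simp
        show "sorted_wrt (\<lambda>(i,_) (i',_). (s(j:=h)) i' \<le> (s(j:=h)) i) rest"
        proof -
          have "sorted_wrt (\<lambda>(j,_) (j',_). s j' \<le> s j) rest" using Cons.prems(3) by simp
          then show ?thesis
            by (rule sorted_wrt_mono_rel[rotated]) (use upd in auto)
        qed
        show "\<forall>(j',x')\<in>set rest. (s(j:=h)) j' \<le> m"
        proof (intro ballI, clarify)
          fix j' x' assume jx': "(j',x') \<in> set rest"
          have "s j' \<le> s j" using Cons.prems(3) jx jx' by auto
          then show "(s(j:=h)) j' \<le> m" using upd[OF jx'] mh' by auto
        qed
        show "m < 3" using mh' by simp
        show "s(j:=h) \<in> states I" using Cons.prems(4) j mh by (simp add: states_upd)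
      qed
      then show ?thesis by simp
    qed simp
  qed simp
  also have "\<dots> = Rloc a b c mu x 3 (s j) 3 (s j) * (if s = t then prod_list (map (\<lambda>(j,x). Rloc a b c mu x 3 (s j) 3 (s j)) rest) else 0)"
    using Cons.IH Cons.prems by simp
  finally show ?case using jx by simp
qed

lemma word_perm_append: "word_perm (w @ v) = word_perm v \<circ> word_perm w"
  unfolding word_perm_def[of "w @ v"] by (simp add: fold_word_perm word_perm_def[of w, symmetric])

lemma word_perm_single: "word_perm [a] = Transposition.transpose a (Suc a)"
  by (simp add: word_perm_def)

lemma transpose_word:
  assumes "1 \<le> a" "a < b" "b \<le> L"
  shows "\<exists>w. set w \<subseteq> {1..<L} \<and> word_perm w = Transposition.transpose a b"
  using assms
proof (induction b)
  case 0 then show ?case by simp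
next
  case (Suc b)
  show ?case
  proof (cases "a = b")
    case True
    then show ?thesis using Suc.prems by (intro exI[of _ "[a]"]) (auto simp: word_perm_single)
  next
    case False
    then have ab: "a < b" using Suc.prems by simp
    obtain w where w: "set w \<subseteq> {1..<L}" "word_perm w = Transposition.transpose a b"
      using Suc.IH[OF Suc.prems(1) ab] Suc.prems by auto
    have e: "Transposition.transpose b (Suc b) \<circ> Transposition.transpose a b \<circ> Transposition.transpose b (Suc b) = Transposition.transpose a (Suc b)"
      using ab by (auto simp: fun_eq_iff transpose_def)
    have "word_perm ([b] @ (w @ [b])) = (Transposition.transpose b (Suc b) \<circ> Transposition.transpose a b) \<circ> Transposition.transpose b (Suc b)"
      by (simp only: word_perm_append word_perm_single w(2))
    then have "word_perm ([b] @ (w @ [b])) = Transposition.transpose a (Suc b)" using e by (simp add: comp_assoc)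
    moreover have "set ([b] @ (w @ [b])) \<subseteq> {1..<L}" using w Suc.prems ab by auto
    ultimately show ?thesis by blast
  qed
qed

lemma perm_word:
  assumes "\<sigma> permutes {1..L}"
  shows "\<exists>w. set w \<subseteq> {1..<L} \<and> word_perm w = \<sigma>"
  using assms finite_atLeastAtMost
proof (induction rule: permutes_induct)
  case id then show ?case by (intro exI[of _ "[]"]) (simp add: word_perm_def)
next
  case (swap a b p)
  obtain w where w: "set w \<subseteq> {1..<L}" "word_perm w = p" using swap.IH by auto
  have "\<exists>v. set v \<subseteq> {1..<L} \<and> word_perm v = Transposition.transpose a b"
  proof (cases "a < b")
    case True then show ?thesis using transpose_word swap.hyps by auto
  next
    case False
    then have "b < a" using swap.hyps by simp
    then show ?thesis using transpose_word[of b a L] swap.hyps by (auto simp: transpose_commute)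
  qed
  then obtain v where v: "set v \<subseteq> {1..<L}" "word_perm v = Transposition.transpose a b" by blast
  show ?case using w v by (intro exI[of _ "w @ v"]) (auto simp: word_perm_append)
qed

lemma Rsigma_word:
  assumes "\<sigma> permutes {1..L}"
  obtains w where "set w \<subseteq> {1..<L}" "word_perm w = \<sigma>" "Rsigma a b c L xi \<sigma> = Rword a b c {1..L} xi w"
proof -
  obtain w0 where "set w0 \<subseteq> {1..<L} \<and> word_perm w0 = \<sigma>" using perm_word[OF assms] by blast
  then have "\<exists>w. set w \<subseteq> {1..<L} \<and> word_perm w = \<sigma> \<and> (\<forall>w'. set w' \<subseteq> {1..<L} \<and> word_perm w' = \<sigma> \<longrightarrow> length w \<le> length w')"
    using ex_has_least_nat[of "\<lambda>w. set w \<subseteq> {1..<L} \<and> word_perm w = \<sigma>" w0 length] by blast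
  then have "\<exists>w. reduced_word L w \<sigma>" unfolding reduced_word_def by blast
  then have r: "reduced_word L (SOME w. reduced_word L w \<sigma>) \<sigma>" by (rule someI_ex)
  show ?thesis
    by (rule that[of "SOME w. reduced_word L w \<sigma>"]) (use r in \<open>auto simp: reduced_word_def Rsigma_def\<close>)
qed



lemma D_G:
  assumes "L \<ge> 1"
  shows "opeq {1..L} (Dop a b c L xi mu) (G a b c mu {1..L} (chainL xi L id) 3 3)"
  unfolding opeq_def Dop_def chainL_def
  using mono_G[of L L 3 3, where a=a and b=b and c=c and xi=xi and mu=mu] by simp

lemma adm_mono:
  assumes adm: "admissible L \<sigma> s" and p: "\<sigma> permutes {1..L}" and ii: "i \<le> i'" "1 \<le> i" "i' \<le> L"
  shows "s (\<sigma> i) \<le> s (\<sigma> i')"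
  using ii
proof (induction i' rule: dec_induct)
  case base then show ?case by simp
next
  case (step n)
  have n: "n \<in> {1..<L}" using step by auto
  have "\<sigma> n \<noteq> \<sigma> (Suc n)"
    using permutes_inj[OF p] by (metis inj_eq n_not_Suc_n)
  then have "s (\<sigma> n) \<le> s (\<sigma> (Suc n))" using adm n unfolding admissible_def
    by (metis less_imp_le linorder_neqE_nat)
  then show ?case using step by simp
qed

lemma chain_sorted:
  assumes adm: "admissible L \<sigma> s" and p: "\<sigma> permutes {1..L}"
  shows "sorted_wrt (\<lambda>(j,_) (j',_). s j' \<le> s j) (map (\<lambda>i. (\<sigma> i, xi (\<sigma> i))) (rev [1..<Suc L]))"
proof -
  have "sorted_wrt (<) [1..<Suc L]" by (rule sorted_wrt_upt)
  then have "sorted_wrt (\<lambda>x y. s (\<sigma> x) \<le> s (\<sigma> y)) [1..<Suc L]"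
    by (rule sorted_wrt_mono_rel[rotated]) (auto intro: adm_mono[OF adm p])
  then show ?thesis by (simp add: sorted_wrt_map sorted_wrt_rev)
qed

lemma Rloc_diag: "v \<in> {1,2,3} \<Longrightarrow> Rloc a b c mu x 3 v 3 v = diagloc a b mu x v"
  unfolding Rloc_def diagloc_def by auto

lemma chain_prod:
  assumes p: "\<sigma> permutes {1..L}" and s: "s \<in> states {1..L}"
  shows "prod_list (map (\<lambda>(j,x). Rloc a b c mu x 3 (s j) 3 (s j)) (map (\<lambda>i. (\<sigma> i, xi (\<sigma> i))) (rev [1..<Suc L])))
       = (\<Prod>i\<in>{1..L}. diagloc a b mu (xi i) (s i))"
proof -
  let ?g = "\<lambda>j. Rloc a b c mu (xi j) 3 (s j) 3 (s j)"
  have "prod_list (map (\<lambda>(j,x). Rloc a b c mu x 3 (s j) 3 (s j)) (map (\<lambda>i. (\<sigma> i, xi (\<sigma> i))) (rev [1..<Suc L])))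
      = prod_list (map (?g \<circ> \<sigma>) (rev [1..<Suc L]))" by (simp add: comp_def)
  also have "\<dots> = prod (?g \<circ> \<sigma>) (set (rev [1..<Suc L]))"
    by (rule prod.distinct_set_conv_list[symmetric]) simp
  also have "\<dots> = prod (?g \<circ> \<sigma>) {1..L}" by (simp only: set_rev set_upt atLeastLessThanSuc_atLeastAtMost)
  also have "\<dots> = prod ?g {1..L}" by (rule prod.permute[OF p, symmetric])
  also have "\<dots> = (\<Prod>i\<in>{1..L}. diagloc a b mu (xi i) (s i))"
    by (intro prod.cong refl Rloc_diag states_val[OF s])
  finally show ?thesis .
qed

lemma Fop_entry:
  assumes s: "s \<in> states {1..L}"
  shows "Fop a b c L xi s u = (\<Sum>\<sigma>\<in>{\<sigma>. \<sigma> permutes {1..L}}. if admissible L \<sigma> s then Rsigma a b c L xi \<sigma> s u else 0)"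
proof -
  have "\<And>\<sigma> al. al \<in> states {1..L} \<Longrightarrow> opmult {1..L} (proj al) (Rsigma a b c L xi \<sigma>) s u = (if al = s then Rsigma a b c L xi \<sigma> s u else 0)"
    unfolding opmult_def proj_def using s by (simp add: mult_delta finite_states)
  then have "\<And>\<sigma>. (\<Sum>al\<in>{al\<in>states {1..L}. admissible L \<sigma> al}. opmult {1..L} (proj al) (Rsigma a b c L xi \<sigma>) s u)
       = (\<Sum>al\<in>{al\<in>states {1..L}. admissible L \<sigma> al}. if al = s then Rsigma a b c L xi \<sigma> s u else 0)"
    by (intro sum.cong refl) auto
  also have "\<And>\<sigma>. (\<Sum>al\<in>{al\<in>states {1..L}. admissible L \<sigma> al}. if al = s then Rsigma a b c L xi \<sigma> s u else 0)
       = (if admissible L \<sigma> s then Rsigma a b c L xi \<sigma> s u else 0)"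
    using s by (simp add: sum.delta' finite_states)
  finally show ?thesis unfolding Fop_def by simp
qed

lemma sigma_term:
  assumes Y: "YBE a b c" and L: "L \<ge> 1" and p: "\<sigma> permutes {1..L}" and adm: "admissible L \<sigma> s"
    and s: "s \<in> states {1..L}" and t: "t \<in> states {1..L}"
  shows "opmult {1..L} (Rsigma a b c L xi \<sigma>) (Dop a b c L xi mu) s t =
         (\<Prod>i\<in>{1..L}. diagloc a b mu (xi i) (s i)) * Rsigma a b c L xi \<sigma> s t"
proof -
  let ?I = "{1..L}"
  obtain w where w: "set w \<subseteq> {1..<L}" "word_perm w = \<sigma>" and R: "Rsigma a b c L xi \<sigma> = Rword a b c ?I xi w"
    using Rsigma_word[OF p] by metis
  let ?ls = "map (\<lambda>i. (\<sigma> i, xi (\<sigma> i))) (rev [1..<Suc L])"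
  have "opeq ?I (opmult ?I (Rsigma a b c L xi \<sigma>) (Dop a b c L xi mu)) (opmult ?I (Rword a b c ?I xi w) (G a b c mu ?I (chainL xi L id) 3 3))"
    unfolding R by (rule opeq_mult[OF opeq_refl D_G[OF L]])
  also have "opeq ?I \<dots> (opmult ?I (G a b c mu ?I ?ls 3 3) (Rword a b c ?I xi w))"
    using Rword_D[OF Y w(1), of 3 3 xi mu] w(2) by simp
  finally have E: "opmult ?I (Rsigma a b c L xi \<sigma>) (Dop a b c L xi mu) s t = opmult ?I (G a b c mu ?I ?ls 3 3) (Rsigma a b c L xi \<sigma>) s t"
    using s t unfolding opeq_def R by blast
  have m: "map fst ?ls = map \<sigma> (rev [1..<Suc L])" by simp
  have dist: "distinct (map fst ?ls)"
  proof -
    have "inj_on \<sigma> (set (rev [1..<Suc L]))" using permutes_inj[OF p] by (rule inj_on_subset) simp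
    then show ?thesis unfolding m distinct_map by simp
  qed
  have "set (map fst ?ls) = \<sigma> ` {1..L}"
    by (simp only: m set_map set_rev set_upt atLeastLessThanSuc_atLeastAtMost)
  then have sub: "set (map fst ?ls) \<subseteq> ?I" using permutes_image[OF p] by simp
  have G: "G a b c mu ?I ?ls 3 3 s u = (if s = u then (\<Prod>i\<in>{1..L}. diagloc a b mu (xi i) (s i)) else 0)" if u: "u \<in> states ?I" for u
  proof -
    have "G a b c mu ?I ?ls 3 3 s u = (if s = u then prod_list (map (\<lambda>(j,x). Rloc a b c mu x 3 (s j) 3 (s j)) ?ls) else 0)"
      by (rule G_diag[OF _ dist sub chain_sorted[OF adm p] s u]) simp
    then show ?thesis by (simp only: chain_prod[OF p s])
  qed
  have "opmult ?I (G a b c mu ?I ?ls 3 3) (Rsigma a b c L xi \<sigma>) s t =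
        (\<Sum>u\<in>states ?I. (if s = u then (\<Prod>i\<in>{1..L}. diagloc a b mu (xi i) (s i)) else 0) * Rsigma a b c L xi \<sigma> u t)"
    unfolding opmult_def using G by (intro sum.cong refl) auto
  also have "\<dots> = (\<Prod>i\<in>{1..L}. diagloc a b mu (xi i) (s i)) * Rsigma a b c L xi \<sigma> s t"
    using s by (simp add: if_distrib[of "\<lambda>v. v * _"] finite_states cong: if_cong)
  finally show ?thesis using E by simp
qed

theorem mainTheorem3:
  fixes a :: "nat \<Rightarrow> complex \<Rightarrow> complex \<Rightarrow> complex"
    and b c :: "nat \<Rightarrow> nat \<Rightarrow> complex \<Rightarrow> complex \<Rightarrow> complex"
    and xi :: "nat \<Rightarrow> complex" and mu :: complex and L :: nat
  assumes "L \<ge> 1"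
    and "YBE a b c"
    and "unitary_R a b c"
  shows "opeq {1..L}
           (opmult {1..L} (Fop a b c L xi) (Dop a b c L xi mu))
           (opmult {1..L} (Diagop a b L xi mu) (Fop a b c L xi))"
  unfolding opeq_def
proof (intro ballI)
  fix s t assume s: "s \<in> states {1..L}" and t: "t \<in> states {1..L}"
  let ?I = "{1..L}"
  let ?P = "{\<sigma>. \<sigma> permutes {1..L}}"
  let ?d = "\<Prod>i\<in>{1..L}. diagloc a b mu (xi i) (s i)"
  have "opmult ?I (Fop a b c L xi) (Dop a b c L xi mu) s t =
     (\<Sum>u\<in>states ?I. (\<Sum>\<sigma>\<in>?P. if admissible L \<sigma> s then Rsigma a b c L xi \<sigma> s u else 0) * Dop a b c L xi mu u t)"
    unfolding opmult_def using Fop_entry[OF s] by simp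
  also have "\<dots> = (\<Sum>\<sigma>\<in>?P. if admissible L \<sigma> s then opmult ?I (Rsigma a b c L xi \<sigma>) (Dop a b c L xi mu) s t else 0)"
    unfolding opmult_def sum_distrib_right
    by (subst sum.swap) (simp add: if_distrib[of "\<lambda>v. v * _"] sum_if_cond cong: if_cong)
  also have "\<dots> = (\<Sum>\<sigma>\<in>?P. if admissible L \<sigma> s then ?d * Rsigma a b c L xi \<sigma> s t else 0)"
    using sigma_term[OF assms(2,1) _ _ s t] by (intro sum.cong refl) auto
  also have "\<dots> = ?d * Fop a b c L xi s t"
    unfolding Fop_entry[OF s] sum_distrib_left mult_if0 ..
  also have "\<dots> = opmult ?I (Diagop a b L xi mu) (Fop a b c L xi) s t"
    unfolding opmult_def Diagop_def using s
    by (simp add: if_distrib[of "\<lambda>v. v * _"] finite_states cong: if_cong)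
  finally show "opmult ?I (Fop a b c L xi) (Dop a b c L xi mu) s t = opmult ?I (Diagop a b L xi mu) (Fop a b c L xi) s t" .
qed

end
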